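(* Let $S=\{(\lambda,\mu,\nu)\in(\Lambda_4)^3 : c_{\lambda\mu}^\nu\neq 0,\ \lambda_4=\mu_4=0,\ \lambda_2=\lambda_3,\ \mu_2=\mu_3\}$. The convex cone generated by $S$ has exactly 8 extremal rays, generated by the triples $(\lambda,\mu,\nu)$: $((1,0,0,0),(0,0,0,0),(1,0,0,0))$, $((0,0,0,0),(1,0,0,0),(1,0,0,0))$, $((1,1,1,0),(0,0,0,0),(1,1,1,0))$, $((0,0,0,0),(1,1,1,0),(1,1,1,0))$, $((1,0,0,0),(1,0,0,0),(1,1,0,0))$, $((1,0,0,0),(1,1,1,0),(1,1,1,1))$, $((1,1,1,0),(1,0,0,0),(1,1,1,1))$, $((1,1,1,0),(1,1,1,0),(2,2,1,1))$. Each of these triples satisfies $c_{\lambda\mu}^\nu=1$, and the Hilbert basis of the semigroup $S$ consists of these 8 triples.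
   Context: $\Lambda_4$ is the set of non-increasing sequences of 4 nonnegative integers. $c_{\lambda\mu}^\nu$ are the Littlewood–Richardson coefficients of $\mathrm{GL}_4(\mathbb{C})$, defined by $V_4(\lambda)\otimes V_4(\mu)=\bigoplus_\nu c_{\lambda\mu}^\nu V_4(\nu)$. *)

theory Defs
  imports "HOL-Analysis.Analysis"
begin

text \<open>Partitions with at most 4 parts: non-increasing lists of 4 naturals.
  Index i (0-based) stands for the (i+1)-th part.\<close>
definition Lambda4 :: "nat list set" where
  "Lambda4 = {l. length l = 4 \<and> sorted_wrt (\<ge>) l}"

definition skew_cell :: "nat list \<Rightarrow> nat list \<Rightarrow> nat \<Rightarrow> nat \<Rightarrow> bool" where
  "skew_cell lam nu i j \<longleftrightarrow> i < 4 \<and> lam ! i \<le> j \<and> j < nu ! i"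

definition reading_word :: "nat list \<Rightarrow> nat list \<Rightarrow> (nat \<Rightarrow> nat \<Rightarrow> nat) \<Rightarrow> nat list" where
  "reading_word lam nu T = concat (map (\<lambda>i. map (\<lambda>j. T i j) (rev [lam ! i..<nu ! i])) [0..<4])"

text \<open>Littlewood-Richardson tableaux of shape nu/lambda and content mu
  (entry k stands for the letter k+1).\<close>
definition LR_tableaux :: "nat list \<Rightarrow> nat list \<Rightarrow> nat list \<Rightarrow> (nat \<Rightarrow> nat \<Rightarrow> nat) set" where
  "LR_tableaux lam mu nu = {T.
     (\<forall>i j. \<not> skew_cell lam nu i j \<longrightarrow> T i j = 0) \<and>
     (\<forall>i j. skew_cell lam nu i j \<longrightarrow> T i j < 4) \<and>
     (\<forall>i j. skew_cell lam nu i j \<and> skew_cell lam nu i (Suc j) \<longrightarrow> T i j \<le> T i (Suc j)) \<and>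
     (\<forall>i j. skew_cell lam nu i j \<and> skew_cell lam nu (Suc i) j \<longrightarrow> T i j < T (Suc i) j) \<and>
     (\<forall>k<4. count_list (reading_word lam nu T) k = mu ! k) \<and>
     (\<forall>p \<le> length (reading_word lam nu T). \<forall>k.
        count_list (take p (reading_word lam nu T)) (Suc k)
          \<le> count_list (take p (reading_word lam nu T)) k)}"

definition LR_coeff :: "nat list \<Rightarrow> nat list \<Rightarrow> nat list \<Rightarrow> nat" where
  "LR_coeff lam mu nu =
     (if lam \<in> Lambda4 \<and> mu \<in> Lambda4 \<and> nu \<in> Lambda4 \<and> (\<forall>i<4. lam ! i \<le> nu ! i)
      then card (LR_tableaux lam mu nu) else 0)"

type_synonym triple = "nat list \<times> nat list \<times> nat list"

definition S_set :: "triple set" where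
  "S_set = {(lam, mu, nu). lam \<in> Lambda4 \<and> mu \<in> Lambda4 \<and> nu \<in> Lambda4 \<and>
      LR_coeff lam mu nu \<noteq> 0 \<and> lam ! 3 = 0 \<and> mu ! 3 = 0 \<and>
      lam ! 1 = lam ! 2 \<and> mu ! 1 = mu ! 2}"

definition vec4 :: "nat list \<Rightarrow> real \<times> real \<times> real \<times> real" where
  "vec4 l = (real (l ! 0), real (l ! 1), real (l ! 2), real (l ! 3))"

definition emb :: "triple \<Rightarrow> (real \<times> real \<times> real \<times> real) \<times> (real \<times> real \<times> real \<times> real) \<times> (real \<times> real \<times> real \<times> real)" where
  "emb t = (case t of (lam, mu, nu) \<Rightarrow> (vec4 lam, vec4 mu, vec4 nu))"

definition extremal_ray :: "'a::real_vector set \<Rightarrow> 'a set \<Rightarrow> bool" where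
  "extremal_ray C R \<longleftrightarrow> R face_of C \<and> (\<exists>v. v \<noteq> 0 \<and> R = {t *\<^sub>R v | t. 0 \<le> t})"

definition ray :: "'a::real_vector \<Rightarrow> 'a set" where
  "ray v = {t *\<^sub>R v | t. 0 \<le> t}"

definition tadd :: "triple \<Rightarrow> triple \<Rightarrow> triple" where
  "tadd s t = (case s of (a, b, c) \<Rightarrow> case t of (a', b', c') \<Rightarrow>
      (map2 (+) a a', map2 (+) b b', map2 (+) c c'))"

definition tzero :: triple where
  "tzero = ([0,0,0,0], [0,0,0,0], [0,0,0,0])"

text \<open>Hilbert basis of a (pointed) affine semigroup M: its irreducible elements,
  i.e. nonzero elements not a sum of two nonzero elements of M.\<close>
definition hilbert_basis :: "triple set \<Rightarrow> triple set" where
  "hilbert_basis M = {s \<in> M. s \<noteq> tzero \<and>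
      \<not> (\<exists>a\<in>M. \<exists>b\<in>M. a \<noteq> tzero \<and> b \<noteq> tzero \<and> s = tadd a b)}"

definition gens :: "triple list" where
  "gens = [([1,0,0,0],[0,0,0,0],[1,0,0,0]),
           ([0,0,0,0],[1,0,0,0],[1,0,0,0]),
           ([1,1,1,0],[0,0,0,0],[1,1,1,0]),
           ([0,0,0,0],[1,1,1,0],[1,1,1,0]),
           ([1,0,0,0],[1,0,0,0],[1,1,0,0]),
           ([1,0,0,0],[1,1,1,0],[1,1,1,1]),
           ([1,1,1,0],[1,0,0,0],[1,1,1,1]),
           ([1,1,1,0],[1,1,1,0],[2,2,1,1])]"

end

theory Submission
  imports Defs
begin


lemma skew_expl:
  "skew_cell [l0,l1,l2,l3] [u0,u1,u2,u3] i j \<longleftrightarrow>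
    (i=0 \<and> l0 \<le> j \<and> j < u0) \<or> (i=1 \<and> l1 \<le> j \<and> j < u1) \<or>
    (i=2 \<and> l2 \<le> j \<and> j < u2) \<or> (i=3 \<and> l3 \<le> j \<and> j < u3)"
proof (cases "i < 4")
  case True
  then have "i = 0 \<or> i = 1 \<or> i = 2 \<or> i = 3" by arith
  then show ?thesis by (elim disjE) (simp_all add: skew_cell_def)
next
  case False
  then show ?thesis by (auto simp: skew_cell_def)
qed

lemma rw_expl:
  "reading_word [l0,l1,l2,l3] [u0,u1,u2,u3] T =
     map (T 0) (rev [l0..<u0]) @ map (T 1) (rev [l1..<u1]) @ map (T 2) (rev [l2..<u2]) @ map (T 3) (rev [l3..<u3])"
proof -
  have u: "[0..<4] = [0,1,2,3::nat]" by (simp add: upt_rec)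
  show ?thesis unfolding reading_word_def u by simp
qed

definition pw :: "nat \<Rightarrow> nat \<Rightarrow> nat \<Rightarrow> nat \<Rightarrow> nat" where
  "pw l z y j = (if j < l + z then 0 else if j < l + z + y then 1 else 2)"

lemma map_const_upt: "(\<And>j. m \<le> j \<Longrightarrow> j < n \<Longrightarrow> f j = c) \<Longrightarrow> map f [m..<n] = replicate (n - m) c"
proof -
  assume "\<And>j. m \<le> j \<Longrightarrow> j < n \<Longrightarrow> f j = c"
  then have "map f [m..<n] = map (\<lambda>_. c) [m..<n]" by (intro map_cong) auto
  then show ?thesis by (simp add: map_replicate_const)
qed

lemma rowlist:
  assumes "l + z + y \<le> u" "\<And>j. l \<le> j \<Longrightarrow> j < u \<Longrightarrow> f j = pw l z y j"
  shows "map f (rev [l..<u]) = replicate (u - l - z - y) 2 @ replicate y 1 @ replicate z 0"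
proof -
  have split: "[l..<u] = [l..<l+z] @ [l+z..<l+z+y] @ [l+z+y..<u]"
  proof -
    have e1: "[l..<u] = [l..<l+z] @ [l+z..<u]"
      using upt_add_eq_append[of l "l+z" "u-(l+z)"] assms(1) by simp
    have e2: "[l+z..<u] = [l+z..<l+z+y] @ [l+z+y..<u]"
      using upt_add_eq_append[of "l+z" "l+z+y" "u-(l+z+y)"] assms(1) by simp
    show ?thesis using e1 e2 by simp
  qed
  have A: "map f [l..<l+z] = replicate z 0"
    using map_const_upt[of l "l+z" f 0] assms by (simp add: pw_def)
  have B: "map f [l+z..<l+z+y] = replicate y 1"
    using map_const_upt[of "l+z" "l+z+y" f 1] assms by (simp add: pw_def)
  have C: "map f [l+z+y..<u] = replicate (u - l - z - y) 2"
    using map_const_upt[of "l+z+y" u f 2] assms by (simp add: pw_def)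
  show ?thesis by (simp add: rev_map[symmetric] split A B C)
qed


lemma mono3:
  assumes mono: "\<And>j. l \<le> j \<Longrightarrow> Suc j < u \<Longrightarrow> f j \<le> f (Suc j)"
      and bnd: "\<And>j. l \<le> j \<Longrightarrow> j < u \<Longrightarrow> f j \<le> 2" and lu: "l \<le> u"
  shows "\<exists>z y. l + z + y \<le> u \<and> (\<forall>j. l \<le> j \<longrightarrow> j < u \<longrightarrow> f j = pw l z y j)"
proof -
  have "l + k \<le> u \<Longrightarrow> \<exists>z y. z + y \<le> k \<and> (\<forall>j. l \<le> j \<longrightarrow> j < l + k \<longrightarrow> f j = pw l z y j)" for k
  proof (induction k)
    case 0
    show ?case by (rule exI[of _ 0], rule exI[of _ 0]) auto
  next
    case (Suc k)
    then obtain z y where zy: "z + y \<le> k" and eq: "\<forall>j. l \<le> j \<longrightarrow> j < l + k \<longrightarrow> f j = pw l z y j"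
      by auto
    have lk: "l + k < u" using Suc.prems by simp
    have fb: "f (l + k) \<le> 2" using bnd lk by simp
    have prev: "f (l + k - 1) \<le> f (l + k)" if "k > 0"
      using mono[of "l + k - 1"] lk that by simp
    have prevpw: "f (l + k - 1) = pw l z y (l + k - 1)" if "k > 0"
      using eq that by simp
    consider "f (l + k) = 0" | "f (l + k) = 1" | "f (l + k) = 2" using fb by arith
    then show ?case
    proof cases
      case 1
      have zk: "z = k \<and> y = 0"
      proof (cases "k = 0")
        case True thus ?thesis using zy by simp
      next
        case False
        then have "pw l z y (l + k - 1) = 0" using prev prevpw 1 by simp
        then show ?thesis using zy False by (auto simp: pw_def split: if_splits)
      qed
      have "\<forall>j. l \<le> j \<longrightarrow> j < l + Suc k \<longrightarrow> f j = pw l (Suc z) 0 j"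
      proof (intro allI impI)
        fix j assume "l \<le> j" "j < l + Suc k"
        then consider "j < l + k" | "j = l + k" by arith
        then show "f j = pw l (Suc z) 0 j"
          using eq zk 1 \<open>l \<le> j\<close> by cases (auto simp: pw_def)
      qed
      then show ?thesis using zk by (intro exI[of _ "Suc z"] exI[of _ 0]) simp
    next
      case 2
      have zk: "z + y = k"
      proof (cases "k = 0")
        case True thus ?thesis using zy by simp
      next
        case False
        then have "pw l z y (l + k - 1) \<le> 1" using prev prevpw 2 by simp
        then show ?thesis using zy False by (auto simp: pw_def split: if_splits)
      qed
      have "\<forall>j. l \<le> j \<longrightarrow> j < l + Suc k \<longrightarrow> f j = pw l z (Suc y) j"
      proof (intro allI impI)
        fix j assume "l \<le> j" "j < l + Suc k"
        then consider "j < l + k" | "j = l + k" by arith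
        then show "f j = pw l z (Suc y) j"
          using eq zk 2 \<open>l \<le> j\<close> by cases (auto simp: pw_def)
      qed
      then show ?thesis using zk by (intro exI[of _ z] exI[of _ "Suc y"]) simp
    next
      case 3
      have "\<forall>j. l \<le> j \<longrightarrow> j < l + Suc k \<longrightarrow> f j = pw l z y j"
      proof (intro allI impI)
        fix j assume "l \<le> j" "j < l + Suc k"
        then consider "j < l + k" | "j = l + k" by arith
        then show "f j = pw l z y j"
          using eq zy 3 \<open>l \<le> j\<close> by cases (auto simp: pw_def)
      qed
      then show ?thesis using zy by (intro exI[of _ z] exI[of _ y]) simp
    qed
  qed
  from this[of "u - l"] lu obtain z y where "z + y \<le> u - l"
    "\<forall>j. l \<le> j \<longrightarrow> j < u \<longrightarrow> f j = pw l z y j" by auto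
  then show ?thesis using lu by (intro exI[of _ z] exI[of _ y]) auto
qed

lemma count_rep: "count_list (replicate m x) y = (if x = y then m else 0)"
  by (induction m) auto

definition latt :: "nat list \<Rightarrow> bool" where
  "latt w \<longleftrightarrow> (\<forall>p k. count_list (take p w) (Suc k) \<le> count_list (take p w) k)"

lemma latt_Nil: "latt []"
  by (simp add: latt_def)

lemma latt_app:
  assumes "latt u"
    and c: "\<And>k. count_list u (Suc k) + (if x = Suc k then m else 0) \<le> count_list u k + (if x = k then m else 0)"
  shows "latt (u @ replicate m x)"
  unfolding latt_def
proof (intro allI)
  fix p k
  show "count_list (take p (u @ replicate m x)) (Suc k) \<le> count_list (take p (u @ replicate m x)) k"
  proof (cases "p \<le> length u")
    case True
    then show ?thesis using assms(1) by (simp add: latt_def)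
  next
    case False
    have u: "count_list u (Suc k) \<le> count_list u k"
      using assms(1) unfolding latt_def by (metis order.refl take_all)
    have "take p (u @ replicate m x) = u @ replicate (min (p - length u) m) x"
      using False by (simp add: take_replicate)
    then show ?thesis using u c[of k] False
      by (simp add: count_rep split: if_splits)
  qed
qed

lemma latt_imp: "latt w \<Longrightarrow> \<forall>p \<le> length w. \<forall>k. count_list (take p w) (Suc k) \<le> count_list (take p w) k"
  by (simp add: latt_def)

definition Cnd :: "nat \<Rightarrow> nat \<Rightarrow> nat \<Rightarrow> nat \<Rightarrow> nat \<Rightarrow> nat \<Rightarrow> nat \<Rightarrow> nat \<Rightarrow> nat \<Rightarrow> nat \<Rightarrow> bool" where
  "Cnd a b x0 p1 q1 q2 s2 p3 q3 s3 \<longleftrightarrow> q1 + q2 + q3 = s2 + s3 \<and> b \<le> a \<and> b + p1 + q1 \<le> a + x0 \<and>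
     q2 + s2 \<le> p1 + q1 \<and> p3 + q3 + s3 \<le> b + q2 + s2 \<and> q1 \<le> x0 \<and> s2 \<le> q1 \<and> q1 + q2 \<le> x0 + p1 \<and>
     s2 + s3 \<le> q1 + q2 \<and> q1 + q2 + q3 \<le> x0 + p1 \<and> p1 + b \<le> a \<and> q2 \<le> p1 \<and> p3 + q3 \<le> b \<and>
     p3 + q3 + s3 \<le> b + q2"

definition trc :: "nat \<Rightarrow> nat \<Rightarrow> nat \<Rightarrow> nat \<Rightarrow> nat \<Rightarrow> nat \<Rightarrow> nat \<Rightarrow> nat \<Rightarrow> nat \<Rightarrow> nat \<Rightarrow> triple" where
  "trc a b x0 p1 q1 q2 s2 p3 q3 s3 = ([a,b,b,0], [x0+p1+p3, q1+q2+q3, q1+q2+q3, 0],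
      [a+x0, b+p1+q1, b+q2+s2, p3+q3+s3])"

definition Tab :: "nat \<Rightarrow> nat \<Rightarrow> nat \<Rightarrow> nat \<Rightarrow> nat \<Rightarrow> nat \<Rightarrow> nat \<Rightarrow> nat \<Rightarrow> nat \<Rightarrow> nat \<Rightarrow> nat \<Rightarrow> nat \<Rightarrow> nat" where
  "Tab a b x0 p1 q1 q2 s2 p3 q3 s3 i j =
     (if i = 0 \<and> a \<le> j \<and> j < a + x0 then pw a x0 0 j
      else if i = 1 \<and> b \<le> j \<and> j < b + p1 + q1 then pw b p1 q1 j
      else if i = 2 \<and> b \<le> j \<and> j < b + q2 + s2 then pw b 0 q2 j
      else if i = 3 \<and> j < p3 + q3 + s3 then pw 0 p3 q3 j else 0)"

lemma rw_Tab:
  "reading_word [a,b,b,0] [a+x0, b+p1+q1, b+q2+s2, p3+q3+s3] (Tab a b x0 p1 q1 q2 s2 p3 q3 s3) =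
    replicate x0 0 @ (replicate q1 1 @ replicate p1 0) @ (replicate s2 2 @ replicate q2 1) @
    (replicate s3 2 @ replicate q3 1 @ replicate p3 0)"
proof -
  let ?T = "Tab a b x0 p1 q1 q2 s2 p3 q3 s3"
  have r0: "map (?T 0) (rev [a..<a+x0]) = replicate 0 2 @ replicate 0 1 @ replicate x0 0"
    using rowlist[of a x0 0 "a+x0" "?T 0"] by (simp add: Tab_def)
  have r1: "map (?T 1) (rev [b..<b+p1+q1]) = replicate 0 2 @ replicate q1 1 @ replicate p1 0"
    using rowlist[of b p1 q1 "b+p1+q1" "?T 1"] by (simp add: Tab_def)
  have r2: "map (?T 2) (rev [b..<b+q2+s2]) = replicate s2 2 @ replicate q2 1 @ replicate 0 0"
    using rowlist[of b 0 q2 "b+q2+s2" "?T 2"] by (simp add: Tab_def)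
  have r3: "map (?T 3) (rev [0..<p3+q3+s3]) = replicate s3 2 @ replicate q3 1 @ replicate p3 0"
    using rowlist[of 0 p3 q3 "p3+q3+s3" "?T 3"] by (simp add: Tab_def)
  show ?thesis unfolding rw_expl r0 r1 r2 r3 by simp
qed




lemma sk_trc: "skew_cell [a,b,b,0] [a+x0, b+p1+q1, b+q2+s2, p3+q3+s3] i j \<longleftrightarrow>
   (i = 0 \<and> a \<le> j \<and> j < a + x0) \<or> (i = 1 \<and> b \<le> j \<and> j < b + p1 + q1)
      \<or> (i = 2 \<and> b \<le> j \<and> j < b + q2 + s2) \<or> (i = 3 \<and> j < p3 + q3 + s3)"
  by (simp add: skew_expl)

lemma c1: "\<not> skew_cell [a,b,b,0] [a+x0, b+p1+q1, b+q2+s2, p3+q3+s3] i j \<Longrightarrow> Tab a b x0 p1 q1 q2 s2 p3 q3 s3 i j = 0"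
  unfolding sk_trc Tab_def by auto

lemma c2: "Tab a b x0 p1 q1 q2 s2 p3 q3 s3 i j < 4"
  unfolding Tab_def pw_def by auto


lemma pw_mono: "j \<le> j' \<Longrightarrow> pw l z y j \<le> pw l z y j'"
  unfolding pw_def by auto

lemma c3:
  assumes "skew_cell [a,b,b,0] [a+x0, b+p1+q1, b+q2+s2, p3+q3+s3] i j"
    "skew_cell [a,b,b,0] [a+x0, b+p1+q1, b+q2+s2, p3+q3+s3] i (Suc j)"
  shows "Tab a b x0 p1 q1 q2 s2 p3 q3 s3 i j \<le> Tab a b x0 p1 q1 q2 s2 p3 q3 s3 i (Suc j)"
proof -
  from assms(1) consider "i = 0 \<and> a \<le> j \<and> j < a + x0" | "i = 1 \<and> b \<le> j \<and> j < b + p1 + q1"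
      | "i = 2 \<and> b \<le> j \<and> j < b + q2 + s2" | "i = 3 \<and> j < p3 + q3 + s3" unfolding sk_trc by blast
  then show ?thesis
  proof cases
    case 1 then show ?thesis using assms(2) by (simp add: sk_trc Tab_def pw_mono)
  next
    case 2 then show ?thesis using assms(2) by (simp add: sk_trc Tab_def pw_mono)
  next
    case 3 then show ?thesis using assms(2) by (simp add: sk_trc Tab_def pw_mono)
  next
    case 4 then show ?thesis using assms(2) by (simp add: sk_trc Tab_def pw_mono)
  qed
qed

lemma c4:
  assumes C: "Cnd a b x0 p1 q1 q2 s2 p3 q3 s3"
    and "skew_cell [a,b,b,0] [a+x0, b+p1+q1, b+q2+s2, p3+q3+s3] i j"
    "skew_cell [a,b,b,0] [a+x0, b+p1+q1, b+q2+s2, p3+q3+s3] (Suc i) j"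
  shows "Tab a b x0 p1 q1 q2 s2 p3 q3 s3 i j < Tab a b x0 p1 q1 q2 s2 p3 q3 s3 (Suc i) j"
proof -
  from assms(2) consider "i = 0 \<and> a \<le> j \<and> j < a + x0" | "i = 1 \<and> b \<le> j \<and> j < b + p1 + q1"
      | "i = 2 \<and> b \<le> j \<and> j < b + q2 + s2" | "i = 3 \<and> j < p3 + q3 + s3" unfolding sk_trc by blast
  then show ?thesis
  proof cases
    case 1
    then have "b \<le> j \<and> j < b + p1 + q1" using assms(3) by (simp add: sk_trc)
    moreover have "p1 + b \<le> a" using C by (simp add: Cnd_def)
    ultimately show ?thesis using 1 by (simp add: Tab_def pw_def)
  next
    case 2
    then have "b \<le> j \<and> j < b + q2 + s2" using assms(3) by (simp add: sk_trc)
    moreover have "q2 \<le> p1" using C by (simp add: Cnd_def)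
    ultimately show ?thesis using 2 by (simp add: Tab_def pw_def)
  next
    case 3
    then have "j < p3 + q3 + s3" using assms(3) by (simp add: sk_trc)
    moreover have "p3 + q3 \<le> b" "p3 + q3 + s3 \<le> b + q2" using C by (simp_all add: Cnd_def)
    ultimately show ?thesis using 3 by (simp add: Tab_def pw_def)
  next
    case 4 then show ?thesis using assms(3) by (simp add: sk_trc)
  qed
qed


lemma cnt_w: "count_list (replicate x0 0 @ (replicate q1 1 @ replicate p1 0) @ (replicate s2 2 @ replicate q2 1) @
    (replicate s3 2 @ replicate q3 1 @ replicate p3 (0::nat))) k =
   (if k = 0 then x0+p1+p3 else if k = 1 then q1+q2+q3 else if k = 2 then s2+s3 else 0)"
  by (simp add: count_rep)

lemma latt_w:
  assumes "q1 \<le> x0" "s2 \<le> q1" "q1 + q2 \<le> x0 + p1" "s2 + s3 \<le> q1 + q2" "q1 + q2 + q3 \<le> x0 + p1"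
  shows "latt (replicate x0 0 @ (replicate q1 1 @ replicate p1 0) @ (replicate s2 2 @ replicate q2 1) @
    (replicate s3 2 @ replicate q3 1 @ replicate p3 (0::nat)))"
proof -
  let ?w = "replicate x0 0 @ (replicate q1 1 @ replicate p1 0) @ (replicate s2 2 @ replicate q2 1) @
    (replicate s3 2 @ replicate q3 1 @ replicate p3 (0::nat))"
  have e: "?w = ((((((([] @ replicate x0 0) @ replicate q1 1) @ replicate p1 0) @ replicate s2 2)
        @ replicate q2 1) @ replicate s3 2) @ replicate q3 1) @ replicate p3 0" by simp
  have l1: "latt ([] @ replicate x0 0)" by (rule latt_app[OF latt_Nil]) simp
  have l2: "latt (([] @ replicate x0 0) @ replicate q1 1)"
    by (rule latt_app[OF l1]) (use assms in \<open>auto simp: count_rep\<close>)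
  have l3: "latt ((([] @ replicate x0 0) @ replicate q1 1) @ replicate p1 0)"
    by (rule latt_app[OF l2]) (use assms in \<open>auto simp: count_rep\<close>)
  have l4: "latt (((([] @ replicate x0 0) @ replicate q1 1) @ replicate p1 0) @ replicate s2 2)"
    by (rule latt_app[OF l3]) (use assms in \<open>auto simp: count_rep\<close>)
  have l5: "latt ((((([] @ replicate x0 0) @ replicate q1 1) @ replicate p1 0) @ replicate s2 2) @ replicate q2 1)"
    by (rule latt_app[OF l4]) (use assms in \<open>auto simp: count_rep\<close>)
  have l6: "latt (((((([] @ replicate x0 0) @ replicate q1 1) @ replicate p1 0) @ replicate s2 2) @ replicate q2 1) @ replicate s3 2)"
    by (rule latt_app[OF l5]) (use assms in \<open>auto simp: count_rep\<close>)
  have l7: "latt ((((((([] @ replicate x0 0) @ replicate q1 1) @ replicate p1 0) @ replicate s2 2) @ replicate q2 1) @ replicate s3 2) @ replicate q3 1)"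
    by (rule latt_app[OF l6]) (use assms in \<open>auto simp: count_rep\<close>)
  have l8: "latt (((((((([] @ replicate x0 0) @ replicate q1 1) @ replicate p1 0) @ replicate s2 2) @ replicate q2 1) @ replicate s3 2) @ replicate q3 1) @ replicate p3 0)"
    by (rule latt_app[OF l7]) (use assms in \<open>auto simp: count_rep\<close>)
  show ?thesis unfolding e by (rule l8)
qed


lemma Suf:
  assumes C: "Cnd a b x0 p1 q1 q2 s2 p3 q3 s3"
  shows "Tab a b x0 p1 q1 q2 s2 p3 q3 s3 \<in> LR_tableaux [a,b,b,0] [x0+p1+p3, q1+q2+q3, q1+q2+q3, 0]
            [a+x0, b+p1+q1, b+q2+s2, p3+q3+s3]"
proof -
  let ?T = "Tab a b x0 p1 q1 q2 s2 p3 q3 s3"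
  let ?lam = "[a,b,b,0::nat]" and ?mu = "[x0+p1+p3, q1+q2+q3, q1+q2+q3, 0::nat]"
    and ?nu = "[a+x0, b+p1+q1, b+q2+s2, p3+q3+s3]"
  let ?w = "replicate x0 0 @ (replicate q1 1 @ replicate p1 0) @ (replicate s2 2 @ replicate q2 1) @
    (replicate s3 2 @ replicate q3 1 @ replicate p3 (0::nat))"
  have rw: "reading_word ?lam ?nu ?T = ?w" by (rule rw_Tab)
  have c5: "\<forall>k<4. count_list (reading_word ?lam ?nu ?T) k = ?mu ! k"
  proof (intro allI impI)
    fix k :: nat assume "k < 4"
    then have "k = 0 \<or> k = 1 \<or> k = 2 \<or> k = 3" by arith
    moreover have "q1 + q2 + q3 = s2 + s3" using C by (simp add: Cnd_def)
    ultimately show "count_list (reading_word ?lam ?nu ?T) k = ?mu ! k"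
      unfolding rw cnt_w by auto
  qed
  have L: "latt ?w"
    by (rule latt_w) (use C in \<open>simp_all add: Cnd_def\<close>)
  have c6: "\<forall>p \<le> length (reading_word ?lam ?nu ?T). \<forall>k.
        count_list (take p (reading_word ?lam ?nu ?T)) (Suc k) \<le> count_list (take p (reading_word ?lam ?nu ?T)) k"
    unfolding rw using latt_imp[OF L] .
  show ?thesis unfolding LR_tableaux_def
    apply (intro CollectI conjI)
    subgoal using c1 by blast
    subgoal using c2 by blast
    subgoal using c3 by blast
    subgoal using c4[OF C] by blast
    subgoal using c5 by blast
    subgoal using c6 by blast
    done
qed



lemma mem_row: "l \<le> j \<Longrightarrow> j < u \<Longrightarrow> f j \<in> set (map f (rev [l..<u]))"
  by simp

lemma count_pos: "x \<in> set xs \<Longrightarrow> count_list xs x > 0"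
  by (induction xs) auto

lemma latD: "\<forall>p \<le> length w. \<forall>k. count_list (take p w) (Suc k) \<le> count_list (take p w) k
   \<Longrightarrow> w = u @ v \<Longrightarrow> count_list u (Suc k) \<le> count_list u k"
  by (drule spec[of _ "length u"]) simp

lemma Nec:
  assumes T: "T \<in> LR_tableaux [a,b,b,0] [c,d,d,0] [n0,n1,n2,n3]"
   and ba: "b \<le> a" and le: "a \<le> n0" "b \<le> n1" "b \<le> n2" and dec: "n1 \<le> n0" "n2 \<le> n1" "n3 \<le> n2"
  shows "\<exists>x0 p1 q1 q2 s2 p3 q3 s3. Cnd a b x0 p1 q1 q2 s2 p3 q3 s3 \<and> c = x0+p1+p3 \<and> d = q1+q2+q3
     \<and> n0 = a+x0 \<and> n1 = b+p1+q1 \<and> n2 = b+q2+s2 \<and> n3 = p3+q3+s3 \<and> T = Tab a b x0 p1 q1 q2 s2 p3 q3 s3"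
proof -
  let ?lam = "[a,b,b,0::nat]" and ?mu = "[c,d,d,0::nat]" and ?nu = "[n0,n1,n2,n3]"
  let ?w = "reading_word ?lam ?nu T"
  have sk: "skew_cell ?lam ?nu i j \<longleftrightarrow> (i = 0 \<and> a \<le> j \<and> j < n0) \<or> (i = 1 \<and> b \<le> j \<and> j < n1)
      \<or> (i = 2 \<and> b \<le> j \<and> j < n2) \<or> (i = 3 \<and> j < n3)" for i j
    by (simp add: skew_expl)
  have out: "\<And>i j. \<not> skew_cell ?lam ?nu i j \<Longrightarrow> T i j = 0"
    using T unfolding LR_tableaux_def by blast
  have lt4: "\<And>i j. skew_cell ?lam ?nu i j \<Longrightarrow> T i j < 4"
    using T unfolding LR_tableaux_def by blast
  have rowm: "\<And>i j. skew_cell ?lam ?nu i j \<Longrightarrow> skew_cell ?lam ?nu i (Suc j) \<Longrightarrow> T i j \<le> T i (Suc j)"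
    using T unfolding LR_tableaux_def by blast
  have colm: "\<And>i j. skew_cell ?lam ?nu i j \<Longrightarrow> skew_cell ?lam ?nu (Suc i) j \<Longrightarrow> T i j < T (Suc i) j"
    using T unfolding LR_tableaux_def by blast
  have cont: "\<And>k. k < 4 \<Longrightarrow> count_list ?w k = ?mu ! k"
    using T unfolding LR_tableaux_def by blast
  have lat: "\<forall>p \<le> length ?w. \<forall>k. count_list (take p ?w) (Suc k) \<le> count_list (take p ?w) k"
    using T unfolding LR_tableaux_def by blast
  have rw: "?w = map (T 0) (rev [a..<n0]) @ map (T 1) (rev [b..<n1]) @ map (T 2) (rev [b..<n2]) @ map (T 3) (rev [0..<n3])"
    by (rule rw_expl)
  have c3: "count_list ?w 3 = 0" using cont[of 3] by simp
  have inw: "T i j \<in> set ?w" if "skew_cell ?lam ?nu i j" for i j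
    using that unfolding sk rw by (elim disjE) auto
  have le2: "T i j \<le> 2" if "skew_cell ?lam ?nu i j" for i j
  proof -
    have "T i j \<noteq> 3" using inw[OF that] c3 count_pos by fastforce
    then show ?thesis using lt4[OF that] by arith
  qed
  have "\<exists>z y. a + z + y \<le> n0 \<and> (\<forall>j. a \<le> j \<longrightarrow> j < n0 \<longrightarrow> T 0 j = pw a z y j)"
  proof (rule mono3)
    show "\<And>j. a \<le> j \<Longrightarrow> Suc j < n0 \<Longrightarrow> T 0 j \<le> T 0 (Suc j)" by (rule rowm) (simp_all add: sk)
    show "\<And>j. a \<le> j \<Longrightarrow> j < n0 \<Longrightarrow> T 0 j \<le> 2" by (rule le2) (simp add: sk)
    show "a \<le> n0" using le by simp
  qed
  then obtain z0 y0 where r0: "a + z0 + y0 \<le> n0" "\<And>j. a \<le> j \<Longrightarrow> j < n0 \<Longrightarrow> T 0 j = pw a z0 y0 j"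
    by blast
  have "\<exists>z y. b + z + y \<le> n1 \<and> (\<forall>j. b \<le> j \<longrightarrow> j < n1 \<longrightarrow> T 1 j = pw b z y j)"
  proof (rule mono3)
    show "\<And>j. b \<le> j \<Longrightarrow> Suc j < n1 \<Longrightarrow> T 1 j \<le> T 1 (Suc j)" by (rule rowm) (simp_all add: sk)
    show "\<And>j. b \<le> j \<Longrightarrow> j < n1 \<Longrightarrow> T 1 j \<le> 2" by (rule le2) (simp add: sk)
    show "b \<le> n1" using le by simp
  qed
  then obtain z1 y1 where r1: "b + z1 + y1 \<le> n1" "\<And>j. b \<le> j \<Longrightarrow> j < n1 \<Longrightarrow> T 1 j = pw b z1 y1 j"
    by blast
  have "\<exists>z y. b + z + y \<le> n2 \<and> (\<forall>j. b \<le> j \<longrightarrow> j < n2 \<longrightarrow> T 2 j = pw b z y j)"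
  proof (rule mono3)
    show "\<And>j. b \<le> j \<Longrightarrow> Suc j < n2 \<Longrightarrow> T 2 j \<le> T 2 (Suc j)" by (rule rowm) (simp_all add: sk)
    show "\<And>j. b \<le> j \<Longrightarrow> j < n2 \<Longrightarrow> T 2 j \<le> 2" by (rule le2) (simp add: sk)
    show "b \<le> n2" using le by simp
  qed
  then obtain z2 y2 where r2: "b + z2 + y2 \<le> n2" "\<And>j. b \<le> j \<Longrightarrow> j < n2 \<Longrightarrow> T 2 j = pw b z2 y2 j"
    by blast
  have "\<exists>z y. 0 + z + y \<le> n3 \<and> (\<forall>j. 0 \<le> j \<longrightarrow> j < n3 \<longrightarrow> T 3 j = pw 0 z y j)"
  proof (rule mono3)
    show "\<And>j. 0 \<le> j \<Longrightarrow> Suc j < n3 \<Longrightarrow> T 3 j \<le> T 3 (Suc j)" by (rule rowm) (simp_all add: sk)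
    show "\<And>j. 0 \<le> j \<Longrightarrow> j < n3 \<Longrightarrow> T 3 j \<le> 2" by (rule le2) (simp add: sk)
    show "0 \<le> n3" by simp
  qed
  then obtain z3 y3 where r3: "0 + z3 + y3 \<le> n3" "\<And>j. 0 \<le> j \<Longrightarrow> j < n3 \<Longrightarrow> T 3 j = pw 0 z3 y3 j"
    by blast
  obtain t0 where t0: "n0 = a + z0 + y0 + t0" using r0(1) le_Suc_ex by blast
  obtain t1 where t1: "n1 = b + z1 + y1 + t1" using r1(1) le_Suc_ex by blast
  obtain t2 where t2: "n2 = b + z2 + y2 + t2" using r2(1) le_Suc_ex by blast
  obtain t3 where t3: "n3 = z3 + y3 + t3" using r3(1) le_Suc_ex by auto
  have R0: "map (T 0) (rev [a..<n0]) = replicate t0 2 @ replicate y0 1 @ replicate z0 0"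
    using rowlist[of a z0 y0 n0 "T 0"] r0 t0 by simp
  have R1: "map (T 1) (rev [b..<n1]) = replicate t1 2 @ replicate y1 1 @ replicate z1 0"
    using rowlist[of b z1 y1 n1 "T 1"] r1 t1 by simp
  have R2: "map (T 2) (rev [b..<n2]) = replicate t2 2 @ replicate y2 1 @ replicate z2 0"
    using rowlist[of b z2 y2 n2 "T 2"] r2 t2 by simp
  have R3: "map (T 3) (rev [0..<n3]) = replicate t3 2 @ replicate y3 1 @ replicate z3 0"
    using rowlist[of 0 z3 y3 n3 "T 3"] r3 t3 by simp
  have W: "?w = (replicate t0 2 @ replicate y0 1 @ replicate z0 0) @ (replicate t1 2 @ replicate y1 1 @ replicate z1 0) @ (replicate t2 2 @ replicate y2 1 @ replicate z2 0) @ (replicate t3 2 @ replicate y3 1 @ replicate z3 0)"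
    unfolding rw R0 R1 R2 R3 by simp
  have L1: "count_list (replicate t0 2) (Suc 1) \<le> count_list (replicate t0 2) (1::nat)"
    by (rule latD[OF lat, of _ "replicate y0 1 @ replicate z0 0 @ replicate t1 2 @ replicate y1 1 @ replicate z1 0 @ replicate t2 2 @ replicate y2 1 @ replicate z2 0 @ replicate t3 2 @ replicate y3 1 @ replicate z3 0"]) (simp add: W)
  have L2: "count_list (replicate t0 2 @ replicate y0 1) (Suc 0) \<le> count_list (replicate t0 2 @ replicate y0 1) (0::nat)"
    by (rule latD[OF lat, of _ "replicate z0 0 @ replicate t1 2 @ replicate y1 1 @ replicate z1 0 @ replicate t2 2 @ replicate y2 1 @ replicate z2 0 @ replicate t3 2 @ replicate y3 1 @ replicate z3 0"]) (simp add: W)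
  have L3: "count_list (replicate t0 2 @ replicate y0 1 @ replicate z0 0 @ replicate t1 2) (Suc 1) \<le> count_list (replicate t0 2 @ replicate y0 1 @ replicate z0 0 @ replicate t1 2) (1::nat)"
    by (rule latD[OF lat, of _ "replicate y1 1 @ replicate z1 0 @ replicate t2 2 @ replicate y2 1 @ replicate z2 0 @ replicate t3 2 @ replicate y3 1 @ replicate z3 0"]) (simp add: W)
  have L8: "count_list (replicate t0 2 @ replicate y0 1 @ replicate z0 0 @ replicate t1 2 @ replicate y1 1) (Suc 0) \<le> count_list (replicate t0 2 @ replicate y0 1 @ replicate z0 0 @ replicate t1 2 @ replicate y1 1) (0::nat)"
    by (rule latD[OF lat, of _ "replicate z1 0 @ replicate t2 2 @ replicate y2 1 @ replicate z2 0 @ replicate t3 2 @ replicate y3 1 @ replicate z3 0"]) (simp add: W)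
  have L4: "count_list (replicate t0 2 @ replicate y0 1 @ replicate z0 0 @ replicate t1 2 @ replicate y1 1 @ replicate z1 0 @ replicate t2 2) (Suc 1) \<le> count_list (replicate t0 2 @ replicate y0 1 @ replicate z0 0 @ replicate t1 2 @ replicate y1 1 @ replicate z1 0 @ replicate t2 2) (1::nat)"
    by (rule latD[OF lat, of _ "replicate y2 1 @ replicate z2 0 @ replicate t3 2 @ replicate y3 1 @ replicate z3 0"]) (simp add: W)
  have L5: "count_list (replicate t0 2 @ replicate y0 1 @ replicate z0 0 @ replicate t1 2 @ replicate y1 1 @ replicate z1 0 @ replicate t2 2 @ replicate y2 1) (Suc 0) \<le> count_list (replicate t0 2 @ replicate y0 1 @ replicate z0 0 @ replicate t1 2 @ replicate y1 1 @ replicate z1 0 @ replicate t2 2 @ replicate y2 1) (0::nat)"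
    by (rule latD[OF lat, of _ "replicate z2 0 @ replicate t3 2 @ replicate y3 1 @ replicate z3 0"]) (simp add: W)
  have L6: "count_list (replicate t0 2 @ replicate y0 1 @ replicate z0 0 @ replicate t1 2 @ replicate y1 1 @ replicate z1 0 @ replicate t2 2 @ replicate y2 1 @ replicate z2 0 @ replicate t3 2) (Suc 1) \<le> count_list (replicate t0 2 @ replicate y0 1 @ replicate z0 0 @ replicate t1 2 @ replicate y1 1 @ replicate z1 0 @ replicate t2 2 @ replicate y2 1 @ replicate z2 0 @ replicate t3 2) (1::nat)"
    by (rule latD[OF lat, of _ "replicate y3 1 @ replicate z3 0"]) (simp add: W)
  have L7: "count_list (replicate t0 2 @ replicate y0 1 @ replicate z0 0 @ replicate t1 2 @ replicate y1 1 @ replicate z1 0 @ replicate t2 2 @ replicate y2 1 @ replicate z2 0 @ replicate t3 2 @ replicate y3 1) (Suc 0) \<le> count_list (replicate t0 2 @ replicate y0 1 @ replicate z0 0 @ replicate t1 2 @ replicate y1 1 @ replicate z1 0 @ replicate t2 2 @ replicate y2 1 @ replicate z2 0 @ replicate t3 2 @ replicate y3 1) (0::nat)"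
    by (rule latD[OF lat, of _ "replicate z3 0"]) (simp add: W)
  have cnt: "count_list ?w k = (if k = 0 then z0+z1+z2+z3 else 0) + (if k = 1 then y0+y1+y2+y3 else 0)
      + (if k = 2 then t0+t1+t2+t3 else 0)" for k
    unfolding W by (simp add: count_rep)
  have K0: "z0+z1+z2+z3 = c" using cont[of 0] cnt[of 0] by simp
  have K1: "y0+y1+y2+y3 = d" using cont[of 1] cnt[of 1] by simp
  have K2: "t0+t1+t2+t3 = d" using cont[of 2] cnt[of 2] by simp
  note LL = L1 L2 L3 L4 L5 L6 L7 L8
  have ty: "t0 = 0" "y0 = 0" "t1 = 0" using LL by (simp_all add: count_rep)
  have Q: "y1 \<le> z0" "t2 \<le> y1" "y1 + y2 \<le> z0 + z1 + z2" "t2 + t3 \<le> y1 + y2" "y1 + y2 + y3 \<le> z0 + z1 + z2"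
    using LL ty by (simp_all add: count_rep)
  have s12: "Suc 0 = (1::nat)" "Suc 1 = (2::nat)" "Suc 2 = (3::nat)" by simp_all
  have col01: "T 0 j < T 1 j" if "skew_cell ?lam ?nu 0 j" "skew_cell ?lam ?nu 1 j" for j
    using colm[of 0 j, unfolded s12] that by blast
  have col12: "T 1 j < T 2 j" if "skew_cell ?lam ?nu 1 j" "skew_cell ?lam ?nu 2 j" for j
    using colm[of 1 j, unfolded s12] that by blast
  have col23: "T 2 j < T 3 j" if "skew_cell ?lam ?nu 2 j" "skew_cell ?lam ?nu 3 j" for j
    using colm[of 2 j, unfolded s12] that by blast
  have z2: "z2 = 0"
  proof (rule ccontr)
    assume nz: "z2 \<noteq> 0"
    have c2: "skew_cell ?lam ?nu 2 b" unfolding sk using t2 nz by simp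
    have c1: "skew_cell ?lam ?nu 1 b" unfolding sk using t2 nz dec by simp
    have "T 1 b < T 2 b" using col12[OF c1 c2] .
    moreover have "T 2 b = 0" using r2(2)[of b] t2 nz by (simp add: pw_def)
    ultimately show False by simp
  qed
  have zb: "z1 + b \<le> a"
  proof (rule ccontr)
    assume nz: "\<not> z1 + b \<le> a"
    have c1: "skew_cell ?lam ?nu 1 a" unfolding sk using t1 nz ba by simp
    have c0: "skew_cell ?lam ?nu 0 a" unfolding sk using t1 nz dec by simp
    have "T 0 a < T 1 a" using col01[OF c0 c1] .
    moreover have "T 1 a = 0" using r1(2)[of a] t1 nz ba by (simp add: pw_def)
    ultimately show False by simp
  qed
  have yz: "y2 \<le> z1"
  proof (rule ccontr)
    assume nz: "\<not> y2 \<le> z1"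
    have c2: "skew_cell ?lam ?nu 2 (b + z1)" unfolding sk using t2 nz z2 by simp
    have c1: "skew_cell ?lam ?nu 1 (b + z1)" unfolding sk using t2 nz z2 dec by simp
    have "T 1 (b + z1) < T 2 (b + z1)" using col12[OF c1 c2] .
    moreover have "T 2 (b + z1) = 1" using r2(2)[of "b + z1"] t2 nz z2 by (simp add: pw_def)
    moreover have "T 1 (b + z1) \<ge> 1" using r1(2)[of "b + z1"] t2 nz z2 dec by (simp add: pw_def)
    ultimately show False by simp
  qed
  have zyb: "z3 + y3 \<le> b"
  proof (rule ccontr)
    assume nz: "\<not> z3 + y3 \<le> b"
    have c3: "skew_cell ?lam ?nu 3 b" unfolding sk using t3 nz by simp
    have c2: "skew_cell ?lam ?nu 2 b" unfolding sk using t3 nz dec by simp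
    have "T 2 b < T 3 b" using col23[OF c2 c3] .
    moreover have "T 3 b \<le> 1" using r3(2)[of b] t3 nz by (simp add: pw_def)
    moreover have "T 2 b \<ge> 1" using r2(2)[of b] t3 nz z2 dec by (simp add: pw_def)
    ultimately show False by simp
  qed
  have nb: "n3 \<le> b + y2"
  proof (rule ccontr)
    assume nz: "\<not> n3 \<le> b + y2"
    have c3: "skew_cell ?lam ?nu 3 (b + y2)" unfolding sk using nz by simp
    have c2: "skew_cell ?lam ?nu 2 (b + y2)" unfolding sk using nz dec by simp
    have "T 2 (b + y2) < T 3 (b + y2)" using col23[OF c2 c3] .
    moreover have "T 3 (b + y2) \<le> 2" using le2[OF c3] .
    moreover have "T 2 (b + y2) = 2" using r2(2)[of "b + y2"] nz z2 dec by (simp add: pw_def)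
    ultimately show False by simp
  qed
  have Cn: "Cnd a b z0 z1 y1 y2 t2 z3 y3 t3"
    unfolding Cnd_def using K1 K2 ty Q z2 zb yz zyb nb ba dec t0 t1 t2 t3
    by (intro conjI; linarith)
  have Teq: "T = Tab a b z0 z1 y1 y2 t2 z3 y3 t3"
  proof (intro ext)
    fix i j
    show "T i j = Tab a b z0 z1 y1 y2 t2 z3 y3 t3 i j"
    proof (cases "skew_cell ?lam ?nu i j")
      case False
      have nc: "\<not> ((i = 0 \<and> a \<le> j \<and> j < n0) \<or> (i = 1 \<and> b \<le> j \<and> j < n1)
        \<or> (i = 2 \<and> b \<le> j \<and> j < n2) \<or> (i = 3 \<and> j < n3))" using False unfolding sk .
      then show ?thesis using out[OF False] t0 t1 t2 t3 ty z2 by (auto simp: Tab_def)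
    next
      case True
      then consider "i = 0 \<and> a \<le> j \<and> j < n0" | "i = 1 \<and> b \<le> j \<and> j < n1"
        | "i = 2 \<and> b \<le> j \<and> j < n2" | "i = 3 \<and> j < n3" unfolding sk by blast
      then show ?thesis
      proof cases
        case 1 then show ?thesis using r0(2)[of j] t0 ty by (simp add: Tab_def)
      next
        case 2 then show ?thesis using r1(2)[of j] t1 ty by (simp add: Tab_def)
      next
        case 3 then show ?thesis using r2(2)[of j] t2 z2 by (simp add: Tab_def)
      next
        case 4 then show ?thesis using r3(2)[of j] t3 by (simp add: Tab_def)
      qed
    qed
  qed
  have e1: "c = z0 + z1 + z3" using K0 z2 by simp
  have e2: "d = y1 + y2 + y3" using K1 ty by simp
  have e3: "n0 = a + z0" "n1 = b + z1 + y1" "n2 = b + y2 + t2" "n3 = z3 + y3 + t3"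
    using t0 t1 t2 t3 ty z2 by simp_all
  show ?thesis using Cn e1 e2 e3 Teq by blast
qed



lemma len4: "length l = 4 \<Longrightarrow> l = [l!0, l!1, l!2, l!3]"
  by (cases l; cases "tl l"; cases "tl (tl l)"; cases "tl (tl (tl l))"; auto)

lemma Lambda4_expl: "[x0,x1,x2,x3] \<in> Lambda4 \<longleftrightarrow> x1 \<le> x0 \<and> x2 \<le> x1 \<and> x3 \<le> x2"
  unfolding Lambda4_def by auto

lemma fin_LR:
  assumes "b \<le> a" "a \<le> n0" "b \<le> n1" "b \<le> n2" "n1 \<le> n0" "n2 \<le> n1" "n3 \<le> n2"
  shows "finite (LR_tableaux [a,b,b,0] [c,d,d,0] [n0,n1,n2,n3])"
proof -
  let ?N = "n0 + n1 + n2 + n3"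
  let ?A = "{..?N} \<times> {..?N} \<times> {..?N} \<times> {..?N} \<times> {..?N} \<times> {..?N} \<times> {..?N} \<times> {..?N}"
  let ?f = "\<lambda>(x0, p1, q1, q2, s2, p3, q3, s3). Tab a b x0 p1 q1 q2 s2 p3 q3 s3"
  have "LR_tableaux [a,b,b,0] [c,d,d,0] [n0,n1,n2,n3] \<subseteq> ?f ` ?A"
  proof
    fix T assume "T \<in> LR_tableaux [a,b,b,0] [c,d,d,0] [n0,n1,n2,n3]"
    from Nec[OF this assms] obtain x0 p1 q1 q2 s2 p3 q3 s3 where
      H: "n0 = a+x0" "n1 = b+p1+q1" "n2 = b+q2+s2" "n3 = p3+q3+s3" "T = Tab a b x0 p1 q1 q2 s2 p3 q3 s3"
      by blast
    have "(x0, p1, q1, q2, s2, p3, q3, s3) \<in> ?A" using H(1-4) by auto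
    moreover have "T = ?f (x0, p1, q1, q2, s2, p3, q3, s3)" using H(5) by simp
    ultimately show "T \<in> ?f ` ?A" by blast
  qed
  moreover have "finite (?f ` ?A)" by (intro finite_imageI finite_cartesian_product) auto
  ultimately show ?thesis by (rule finite_subset)
qed

lemma S_char:
  "t \<in> S_set \<longleftrightarrow> (\<exists>a b x0 p1 q1 q2 s2 p3 q3 s3. Cnd a b x0 p1 q1 q2 s2 p3 q3 s3 \<and> t = trc a b x0 p1 q1 q2 s2 p3 q3 s3)"
proof
  assume "t \<in> S_set"
  then obtain lam mu nu where t: "t = (lam, mu, nu)" and L: "lam \<in> Lambda4" "mu \<in> Lambda4" "nu \<in> Lambda4"
    and LR: "LR_coeff lam mu nu \<noteq> 0" and z: "lam ! 3 = 0" "mu ! 3 = 0" "lam ! 1 = lam ! 2" "mu ! 1 = mu ! 2"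
    unfolding S_set_def by blast
  have lam: "lam = [lam!0, lam!1, lam!1, 0]" using len4[of lam] L(1) z unfolding Lambda4_def by auto
  have mu: "mu = [mu!0, mu!1, mu!1, 0]" using len4[of mu] L(2) z unfolding Lambda4_def by auto
  have nu: "nu = [nu!0, nu!1, nu!2, nu!3]" using len4[of nu] L(3) unfolding Lambda4_def by auto
  obtain a b c d n0 n1 n2 n3 where E: "lam = [a,b,b,0]" "mu = [c,d,d,0]" "nu = [n0,n1,n2,n3]"
    using lam mu nu by blast
  have le: "\<forall>i<4. lam ! i \<le> nu ! i" and cne: "card (LR_tableaux lam mu nu) \<noteq> 0"
    using LR unfolding LR_coeff_def by (auto split: if_splits)
  have le': "a \<le> n0" "b \<le> n1" "b \<le> n2" using le[rule_format, of 0] le[rule_format, of 1] le[rule_format, of 2]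
    unfolding E by simp_all
  have part: "b \<le> a" "n1 \<le> n0" "n2 \<le> n1" "n3 \<le> n2" using L unfolding E Lambda4_expl by simp_all
  from cne obtain T where "T \<in> LR_tableaux lam mu nu" by fastforce
  then have "T \<in> LR_tableaux [a,b,b,0] [c,d,d,0] [n0,n1,n2,n3]" using E by simp
  from Nec[OF this part(1) le' part(2-4)] obtain x0 p1 q1 q2 s2 p3 q3 s3 where
    H: "Cnd a b x0 p1 q1 q2 s2 p3 q3 s3" "c = x0+p1+p3" "d = q1+q2+q3"
     "n0 = a+x0" "n1 = b+p1+q1" "n2 = b+q2+s2" "n3 = p3+q3+s3" by blast
  have "t = trc a b x0 p1 q1 q2 s2 p3 q3 s3" unfolding t E H(2-7) trc_def by simp
  then show "\<exists>a b x0 p1 q1 q2 s2 p3 q3 s3. Cnd a b x0 p1 q1 q2 s2 p3 q3 s3 \<and> t = trc a b x0 p1 q1 q2 s2 p3 q3 s3"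
    using H(1) by blast
next
  assume "\<exists>a b x0 p1 q1 q2 s2 p3 q3 s3. Cnd a b x0 p1 q1 q2 s2 p3 q3 s3 \<and> t = trc a b x0 p1 q1 q2 s2 p3 q3 s3"
  then obtain a b x0 p1 q1 q2 s2 p3 q3 s3 where C: "Cnd a b x0 p1 q1 q2 s2 p3 q3 s3"
    and t: "t = trc a b x0 p1 q1 q2 s2 p3 q3 s3" by blast
  have ineq: "b \<le> a" "q1+q2+q3 \<le> x0+p1+p3" "b+p1+q1 \<le> a+x0" "b+q2+s2 \<le> b+p1+q1" "p3+q3+s3 \<le> b+q2+s2"
    using C unfolding Cnd_def by linarith+
  have L: "[a,b,b,0] \<in> Lambda4" "[x0+p1+p3, q1+q2+q3, q1+q2+q3, 0] \<in> Lambda4"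
     "[a+x0, b+p1+q1, b+q2+s2, p3+q3+s3] \<in> Lambda4"
    unfolding Lambda4_expl using ineq by simp_all
  have le: "\<forall>i<4. [a,b,b,0] ! i \<le> [a+x0, b+p1+q1, b+q2+s2, p3+q3+s3] ! i"
  proof (intro allI impI)
    fix i :: nat assume "i < 4"
    then have "i = 0 \<or> i = 1 \<or> i = 2 \<or> i = 3" by arith
    then show "[a,b,b,0] ! i \<le> [a+x0, b+p1+q1, b+q2+s2, p3+q3+s3] ! i" by auto
  qed
  let ?L = "LR_tableaux [a,b,b,0] [x0+p1+p3, q1+q2+q3, q1+q2+q3, 0] [a+x0, b+p1+q1, b+q2+s2, p3+q3+s3]"
  have fin: "finite ?L" by (rule fin_LR) (use ineq in simp_all)
  have ne: "?L \<noteq> {}" using Suf[OF C] by blast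
  have "LR_coeff [a,b,b,0] [x0+p1+p3, q1+q2+q3, q1+q2+q3, 0] [a+x0, b+p1+q1, b+q2+s2, p3+q3+s3] \<noteq> 0"
    unfolding LR_coeff_def using L le fin ne by simp
  then show "t \<in> S_set" unfolding t trc_def S_set_def using L by simp
qed


lemma LR_gen:
  assumes C0: "Cnd a b x0 p1 q1 q2 s2 p3 q3 s3"
  and U: "\<And>x0' p1' q1' q2' s2' p3' q3' s3'. Cnd a b x0' p1' q1' q2' s2' p3' q3' s3' \<Longrightarrow>
      x0'+p1'+p3' = x0+p1+p3 \<Longrightarrow> q1'+q2'+q3' = q1+q2+q3 \<Longrightarrow> a+x0' = a+x0 \<Longrightarrow> b+p1'+q1' = b+p1+q1 \<Longrightarrow>
      b+q2'+s2' = b+q2+s2 \<Longrightarrow> p3'+q3'+s3' = p3+q3+s3 \<Longrightarrow>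
      x0' = x0 \<and> p1' = p1 \<and> q1' = q1 \<and> q2' = q2 \<and> s2' = s2 \<and> p3' = p3 \<and> q3' = q3 \<and> s3' = s3"
  shows "LR_coeff [a,b,b,0] [x0+p1+p3, q1+q2+q3, q1+q2+q3, 0] [a+x0, b+p1+q1, b+q2+s2, p3+q3+s3] = 1"
proof -
  have ineq: "b \<le> a" "q1+q2+q3 \<le> x0+p1+p3" "b+p1+q1 \<le> a+x0" "b+q2+s2 \<le> b+p1+q1" "p3+q3+s3 \<le> b+q2+s2"
    using C0 unfolding Cnd_def by linarith+
  have L: "[a,b,b,0] \<in> Lambda4" "[x0+p1+p3, q1+q2+q3, q1+q2+q3, 0] \<in> Lambda4"
     "[a+x0, b+p1+q1, b+q2+s2, p3+q3+s3] \<in> Lambda4"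
    unfolding Lambda4_expl using ineq by simp_all
  have le: "\<forall>i<4. [a,b,b,0] ! i \<le> [a+x0, b+p1+q1, b+q2+s2, p3+q3+s3] ! i"
  proof (intro allI impI)
    fix i :: nat assume "i < 4"
    then have "i = 0 \<or> i = 1 \<or> i = 2 \<or> i = 3" by arith
    then show "[a,b,b,0] ! i \<le> [a+x0, b+p1+q1, b+q2+s2, p3+q3+s3] ! i" by auto
  qed
  let ?L = "LR_tableaux [a,b,b,0] [x0+p1+p3, q1+q2+q3, q1+q2+q3, 0] [a+x0, b+p1+q1, b+q2+s2, p3+q3+s3]"
  have "?L = {Tab a b x0 p1 q1 q2 s2 p3 q3 s3}"
  proof
    show "?L \<subseteq> {Tab a b x0 p1 q1 q2 s2 p3 q3 s3}"
    proof
      fix T assume "T \<in> ?L"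
      have lee: "a \<le> a + x0" "b \<le> b + p1 + q1" "b \<le> b + q2 + s2" by simp_all
      from Nec[OF \<open>T \<in> ?L\<close> ineq(1) lee ineq(3) ineq(4) ineq(5)] obtain x0' p1' q1' q2' s2' p3' q3' s3' where
        H: "Cnd a b x0' p1' q1' q2' s2' p3' q3' s3'" "x0+p1+p3 = x0'+p1'+p3'" "q1+q2+q3 = q1'+q2'+q3'"
     "a+x0 = a+x0'" "b+p1+q1 = b+p1'+q1'" "b+q2+s2 = b+q2'+s2'" "p3+q3+s3 = p3'+q3'+s3'"
     "T = Tab a b x0' p1' q1' q2' s2' p3' q3' s3'" by blast
      from U[OF H(1) H(2-7)[symmetric]] H(8) show "T \<in> {Tab a b x0 p1 q1 q2 s2 p3 q3 s3}" by simp
    qed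
  next
    show "{Tab a b x0 p1 q1 q2 s2 p3 q3 s3} \<subseteq> ?L" using Suf[OF C0] by simp
  qed
  then show ?thesis unfolding LR_coeff_def using L le by simp
qed

lemma gens_trc: "gens = [trc 1 0 0 0 0 0 0 0 0 0, trc 0 0 1 0 0 0 0 0 0 0, trc 1 1 0 0 0 0 0 0 0 0,
  trc 0 0 1 0 1 0 1 0 0 0, trc 1 0 0 1 0 0 0 0 0 0, trc 1 0 0 1 0 1 0 0 0 1, trc 1 1 0 0 0 0 0 1 0 0,
  trc 1 1 1 0 1 0 0 0 0 1]"
  unfolding gens_def trc_def by simp

lemma gens_Cnd: "Cnd 1 0 0 0 0 0 0 0 0 0" "Cnd 0 0 1 0 0 0 0 0 0 0" "Cnd 1 1 0 0 0 0 0 0 0 0"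
  "Cnd 0 0 1 0 1 0 1 0 0 0" "Cnd 1 0 0 1 0 0 0 0 0 0" "Cnd 1 0 0 1 0 1 0 0 0 1" "Cnd 1 1 0 0 0 0 0 1 0 0"
  "Cnd 1 1 1 0 1 0 0 0 0 1"
  unfolding Cnd_def by simp_all

lemma U1: "Cnd 1 0 x0' p1' q1' q2' s2' p3' q3' s3' \<Longrightarrow>
      x0'+p1'+p3' = 0+0+0 \<Longrightarrow> q1'+q2'+q3' = 0+0+0 \<Longrightarrow> 1+x0' = 1+0 \<Longrightarrow> 0+p1'+q1' = 0+0+0 \<Longrightarrow>
      0+q2'+s2' = 0+0+0 \<Longrightarrow> p3'+q3'+s3' = 0+0+0 \<Longrightarrow>
      x0' = 0 \<and> p1' = 0 \<and> q1' = 0 \<and> q2' = 0 \<and> s2' = 0 \<and> p3' = 0 \<and> q3' = 0 \<and> s3' = 0"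
  unfolding Cnd_def by (intro conjI; linarith)

lemma U2: "Cnd 0 0 x0' p1' q1' q2' s2' p3' q3' s3' \<Longrightarrow>
      x0'+p1'+p3' = 1+0+0 \<Longrightarrow> q1'+q2'+q3' = 0+0+0 \<Longrightarrow> 0+x0' = 0+1 \<Longrightarrow> 0+p1'+q1' = 0+0+0 \<Longrightarrow>
      0+q2'+s2' = 0+0+0 \<Longrightarrow> p3'+q3'+s3' = 0+0+0 \<Longrightarrow>
      x0' = 1 \<and> p1' = 0 \<and> q1' = 0 \<and> q2' = 0 \<and> s2' = 0 \<and> p3' = 0 \<and> q3' = 0 \<and> s3' = 0"
  unfolding Cnd_def by (intro conjI; linarith)

lemma U3: "Cnd 1 1 x0' p1' q1' q2' s2' p3' q3' s3' \<Longrightarrow>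
      x0'+p1'+p3' = 0+0+0 \<Longrightarrow> q1'+q2'+q3' = 0+0+0 \<Longrightarrow> 1+x0' = 1+0 \<Longrightarrow> 1+p1'+q1' = 1+0+0 \<Longrightarrow>
      1+q2'+s2' = 1+0+0 \<Longrightarrow> p3'+q3'+s3' = 0+0+0 \<Longrightarrow>
      x0' = 0 \<and> p1' = 0 \<and> q1' = 0 \<and> q2' = 0 \<and> s2' = 0 \<and> p3' = 0 \<and> q3' = 0 \<and> s3' = 0"
  unfolding Cnd_def by (intro conjI; linarith)

lemma U4: "Cnd 0 0 x0' p1' q1' q2' s2' p3' q3' s3' \<Longrightarrow>
      x0'+p1'+p3' = 1+0+0 \<Longrightarrow> q1'+q2'+q3' = 1+0+0 \<Longrightarrow> 0+x0' = 0+1 \<Longrightarrow> 0+p1'+q1' = 0+0+1 \<Longrightarrow>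
      0+q2'+s2' = 0+0+1 \<Longrightarrow> p3'+q3'+s3' = 0+0+0 \<Longrightarrow>
      x0' = 1 \<and> p1' = 0 \<and> q1' = 1 \<and> q2' = 0 \<and> s2' = 1 \<and> p3' = 0 \<and> q3' = 0 \<and> s3' = 0"
  unfolding Cnd_def by (intro conjI; linarith)

lemma U5: "Cnd 1 0 x0' p1' q1' q2' s2' p3' q3' s3' \<Longrightarrow>
      x0'+p1'+p3' = 0+1+0 \<Longrightarrow> q1'+q2'+q3' = 0+0+0 \<Longrightarrow> 1+x0' = 1+0 \<Longrightarrow> 0+p1'+q1' = 0+1+0 \<Longrightarrow>
      0+q2'+s2' = 0+0+0 \<Longrightarrow> p3'+q3'+s3' = 0+0+0 \<Longrightarrow>
      x0' = 0 \<and> p1' = 1 \<and> q1' = 0 \<and> q2' = 0 \<and> s2' = 0 \<and> p3' = 0 \<and> q3' = 0 \<and> s3' = 0"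
  unfolding Cnd_def by (intro conjI; linarith)

lemma U6: "Cnd 1 0 x0' p1' q1' q2' s2' p3' q3' s3' \<Longrightarrow>
      x0'+p1'+p3' = 0+1+0 \<Longrightarrow> q1'+q2'+q3' = 0+1+0 \<Longrightarrow> 1+x0' = 1+0 \<Longrightarrow> 0+p1'+q1' = 0+1+0 \<Longrightarrow>
      0+q2'+s2' = 0+1+0 \<Longrightarrow> p3'+q3'+s3' = 0+0+1 \<Longrightarrow>
      x0' = 0 \<and> p1' = 1 \<and> q1' = 0 \<and> q2' = 1 \<and> s2' = 0 \<and> p3' = 0 \<and> q3' = 0 \<and> s3' = 1"
  unfolding Cnd_def by (intro conjI; linarith)

lemma U7: "Cnd 1 1 x0' p1' q1' q2' s2' p3' q3' s3' \<Longrightarrow>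
      x0'+p1'+p3' = 0+0+1 \<Longrightarrow> q1'+q2'+q3' = 0+0+0 \<Longrightarrow> 1+x0' = 1+0 \<Longrightarrow> 1+p1'+q1' = 1+0+0 \<Longrightarrow>
      1+q2'+s2' = 1+0+0 \<Longrightarrow> p3'+q3'+s3' = 1+0+0 \<Longrightarrow>
      x0' = 0 \<and> p1' = 0 \<and> q1' = 0 \<and> q2' = 0 \<and> s2' = 0 \<and> p3' = 1 \<and> q3' = 0 \<and> s3' = 0"
  unfolding Cnd_def by (intro conjI; linarith)

lemma U8: "Cnd 1 1 x0' p1' q1' q2' s2' p3' q3' s3' \<Longrightarrow>
      x0'+p1'+p3' = 1+0+0 \<Longrightarrow> q1'+q2'+q3' = 1+0+0 \<Longrightarrow> 1+x0' = 1+1 \<Longrightarrow> 1+p1'+q1' = 1+0+1 \<Longrightarrow>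
      1+q2'+s2' = 1+0+0 \<Longrightarrow> p3'+q3'+s3' = 0+0+1 \<Longrightarrow>
      x0' = 1 \<and> p1' = 0 \<and> q1' = 1 \<and> q2' = 0 \<and> s2' = 0 \<and> p3' = 0 \<and> q3' = 0 \<and> s3' = 1"
  unfolding Cnd_def by (intro conjI; linarith)

lemma gens_LR: "\<forall>t \<in> set gens. case t of (lam, mu, nu) \<Rightarrow> LR_coeff lam mu nu = 1"
proof -
  have "LR_coeff (fst t) (fst (snd t)) (snd (snd t)) = 1" if "t \<in> set gens" for t
  proof -
    from that consider "t = trc 1 0 0 0 0 0 0 0 0 0" | "t = trc 0 0 1 0 0 0 0 0 0 0" | "t = trc 1 1 0 0 0 0 0 0 0 0" | "t = trc 0 0 1 0 1 0 1 0 0 0" | "t = trc 1 0 0 1 0 0 0 0 0 0" | "t = trc 1 0 0 1 0 1 0 0 0 1" | "t = trc 1 1 0 0 0 0 0 1 0 0" | "t = trc 1 1 1 0 1 0 0 0 0 1" unfolding gens_trc by auto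
    then show ?thesis
    proof cases
      case 1 show ?thesis using LR_gen[OF gens_Cnd(1) U1] unfolding 1 trc_def by simp
    next
      case 2 show ?thesis using LR_gen[OF gens_Cnd(2) U2] unfolding 2 trc_def by simp
    next
      case 3 show ?thesis using LR_gen[OF gens_Cnd(3) U3] unfolding 3 trc_def by simp
    next
      case 4 show ?thesis using LR_gen[OF gens_Cnd(4) U4] unfolding 4 trc_def by simp
    next
      case 5 show ?thesis using LR_gen[OF gens_Cnd(5) U5] unfolding 5 trc_def by simp
    next
      case 6 show ?thesis using LR_gen[OF gens_Cnd(6) U6] unfolding 6 trc_def by simp
    next
      case 7 show ?thesis using LR_gen[OF gens_Cnd(7) U7] unfolding 7 trc_def by simp
    next
      case 8 show ?thesis using LR_gen[OF gens_Cnd(8) U8] unfolding 8 trc_def by simp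
    qed
  qed
  then show ?thesis by (auto split: prod.splits)
qed



lemma tadd_trc: "tadd (trc a b x0 p1 q1 q2 s2 p3 q3 s3) (trc a' b' x0' p1' q1' q2' s2' p3' q3' s3') =
   trc (a+a') (b+b') (x0+x0') (p1+p1') (q1+q1') (q2+q2') (s2+s2') (p3+p3') (q3+q3') (s3+s3')"
  by (simp add: tadd_def trc_def algebra_simps)

lemma decomp:
  assumes C: "Cnd a b x0 p1 q1 q2 s2 p3 q3 s3" and pos: "a+b+x0+p1+q1+q2+s2+p3+q3+s3 > 0"
  shows "\<exists>g\<in>set gens. \<exists>a' b' x0' p1' q1' q2' s2' p3' q3' s3'. Cnd a' b' x0' p1' q1' q2' s2' p3' q3' s3' \<and>
     trc a b x0 p1 q1 q2 s2 p3 q3 s3 = tadd g (trc a' b' x0' p1' q1' q2' s2' p3' q3' s3') \<and> a'+b'+x0'+p1'+q1'+q2'+s2'+p3'+q3'+s3' < a+b+x0+p1+q1+q2+s2+p3+q3+s3"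
proof -
  have C': "q1 + q2 + q3 = s2 + s3" "b \<le> a" "b + p1 + q1 \<le> a + x0"
     "q2 + s2 \<le> p1 + q1" "p3 + q3 + s3 \<le> b + q2 + s2" "q1 \<le> x0" "s2 \<le> q1" "q1 + q2 \<le> x0 + p1"
     "s2 + s3 \<le> q1 + q2" "q1 + q2 + q3 \<le> x0 + p1" "p1 + b \<le> a" "q2 \<le> p1" "p3 + q3 \<le> b"
     "p3 + q3 + s3 \<le> b + q2" using C unfolding Cnd_def by simp_all
  show ?thesis
  proof (cases "1 \<le> p3")
    case True
    have h0: "1 \<le> p3" using True by simp_all
    have pos1: "1 \<le> a" "1 \<le> b" "1 \<le> p3" using  h0 C' by linarith+
    obtain am where ea: "a = am + 1" using pos1 by (intro that[of "a - 1"]) simp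
    obtain bm where eb: "b = bm + 1" using pos1 by (intro that[of "b - 1"]) simp
    obtain p3m where ep3: "p3 = p3m + 1" using pos1 by (intro that[of "p3 - 1"]) simp
    have eq: "trc a b x0 p1 q1 q2 s2 p3 q3 s3 = tadd (trc 1 1 0 0 0 0 0 1 0 0) (trc am bm x0 p1 q1 q2 s2 p3m q3 s3)"
      unfolding tadd_trc ea eb ep3 by simp
    have cn: "Cnd am bm x0 p1 q1 q2 s2 p3m q3 s3" using C  unfolding ea eb ep3 Cnd_def by simp
    have mem: "trc 1 1 0 0 0 0 0 1 0 0 \<in> set gens" unfolding gens_trc by simp
    have sz: "am+bm+x0+p1+q1+q2+s2+p3m+q3+s3 < a+b+x0+p1+q1+q2+s2+p3+q3+s3" unfolding ea eb ep3 by simp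
    show ?thesis apply (rule bexI[OF _ mem])
      apply (rule exI[of _ "am"])
      apply (rule exI[of _ "bm"])
      apply (rule exI[of _ "x0"])
      apply (rule exI[of _ "p1"])
      apply (rule exI[of _ "q1"])
      apply (rule exI[of _ "q2"])
      apply (rule exI[of _ "s2"])
      apply (rule exI[of _ "p3m"])
      apply (rule exI[of _ "q3"])
      apply (rule exI[of _ "s3"])
      using eq cn sz by blast
  next
    case False
    note n0 = False
    show ?thesis
    proof (cases "1 \<le> p1 \<and> 1 \<le> q2 \<and> 1 \<le> s3")
      case True
      have h1: "1 \<le> p1" "1 \<le> q2" "1 \<le> s3" using True by simp_all
      have zs: "p3 = 0" using  n0 h1 C' by linarith+
      have pos1: "1 \<le> a" "1 \<le> p1" "1 \<le> q2" "1 \<le> s3" using  n0 h1 C' by linarith+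
      obtain am where ea: "a = am + 1" using pos1 by (intro that[of "a - 1"]) simp
      obtain p1m where ep1: "p1 = p1m + 1" using pos1 by (intro that[of "p1 - 1"]) simp
      obtain q2m where eq2: "q2 = q2m + 1" using pos1 by (intro that[of "q2 - 1"]) simp
      obtain s3m where es3: "s3 = s3m + 1" using pos1 by (intro that[of "s3 - 1"]) simp
      have eq: "trc a b x0 p1 q1 q2 s2 p3 q3 s3 = tadd (trc 1 0 0 1 0 1 0 0 0 1) (trc am b x0 p1m q1 q2m s2 p3 q3 s3m)"
        unfolding tadd_trc ea ep1 eq2 es3 by simp
      have cn: "Cnd am b x0 p1m q1 q2m s2 p3 q3 s3m" using C  zs unfolding ea ep1 eq2 es3 Cnd_def by simp
      have mem: "trc 1 0 0 1 0 1 0 0 0 1 \<in> set gens" unfolding gens_trc by simp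
      have sz: "am+b+x0+p1m+q1+q2m+s2+p3+q3+s3m < a+b+x0+p1+q1+q2+s2+p3+q3+s3" unfolding ea ep1 eq2 es3 by simp
      show ?thesis apply (rule bexI[OF _ mem])
        apply (rule exI[of _ "am"])
        apply (rule exI[of _ "b"])
        apply (rule exI[of _ "x0"])
        apply (rule exI[of _ "p1m"])
        apply (rule exI[of _ "q1"])
        apply (rule exI[of _ "q2m"])
        apply (rule exI[of _ "s2"])
        apply (rule exI[of _ "p3"])
        apply (rule exI[of _ "q3"])
        apply (rule exI[of _ "s3m"])
        using eq cn sz by blast
    next
      case False
      note n1 = False
      show ?thesis
      proof (cases "p1 + b < a")
        case True
        have h2: "p1 + b < a" using True by simp_all
        have zs: "p3 = 0" using  n0 h2 C' by linarith+
        have pos1: "1 \<le> a" using  n0 h2 C' by linarith+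
        obtain am where ea: "a = am + 1" using pos1 by (intro that[of "a - 1"]) simp
        have eq: "trc a b x0 p1 q1 q2 s2 p3 q3 s3 = tadd (trc 1 0 0 0 0 0 0 0 0 0) (trc am b x0 p1 q1 q2 s2 p3 q3 s3)"
          unfolding tadd_trc ea by simp
        have cn: "Cnd am b x0 p1 q1 q2 s2 p3 q3 s3" using C  zs h2 unfolding ea Cnd_def by simp
        have mem: "trc 1 0 0 0 0 0 0 0 0 0 \<in> set gens" unfolding gens_trc by simp
        have sz: "am+b+x0+p1+q1+q2+s2+p3+q3+s3 < a+b+x0+p1+q1+q2+s2+p3+q3+s3" unfolding ea by simp
        show ?thesis apply (rule bexI[OF _ mem])
          apply (rule exI[of _ "am"])
          apply (rule exI[of _ "b"])
          apply (rule exI[of _ "x0"])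
          apply (rule exI[of _ "p1"])
          apply (rule exI[of _ "q1"])
          apply (rule exI[of _ "q2"])
          apply (rule exI[of _ "s2"])
          apply (rule exI[of _ "p3"])
          apply (rule exI[of _ "q3"])
          apply (rule exI[of _ "s3"])
          using eq cn sz by blast
      next
        case False
        note n2 = False
        show ?thesis
        proof (cases "1 \<le> s3")
          case True
          have h3: "1 \<le> s3" using True by simp_all
          have nn: "\<not> (1 \<le> p1 \<and> 1 \<le> q2)" using n1 h3 by simp
          have q20: "q2 = 0" using nn C'(12) by auto
          have zs: "p3 = 0" "q2 = 0" "q3 = 0" using  n0 n2 h3 q20 C' by linarith+
          have pos1: "1 \<le> a" "1 \<le> b" "1 \<le> x0" "1 \<le> q1" "1 \<le> s3" using  n0 n2 h3 q20 C' by linarith+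
          obtain am where ea: "a = am + 1" using pos1 by (intro that[of "a - 1"]) simp
          obtain bm where eb: "b = bm + 1" using pos1 by (intro that[of "b - 1"]) simp
          obtain x0m where ex0: "x0 = x0m + 1" using pos1 by (intro that[of "x0 - 1"]) simp
          obtain q1m where eq1: "q1 = q1m + 1" using pos1 by (intro that[of "q1 - 1"]) simp
          obtain s3m where es3: "s3 = s3m + 1" using pos1 by (intro that[of "s3 - 1"]) simp
          have eq: "trc a b x0 p1 q1 q2 s2 p3 q3 s3 = tadd (trc 1 1 1 0 1 0 0 0 0 1) (trc am bm x0m p1 q1m q2 s2 p3 q3 s3m)"
            unfolding tadd_trc ea eb ex0 eq1 es3 by simp
          have cn: "Cnd am bm x0m p1 q1m q2 s2 p3 q3 s3m" using C  zs unfolding ea eb ex0 eq1 es3 Cnd_def by simp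
          have mem: "trc 1 1 1 0 1 0 0 0 0 1 \<in> set gens" unfolding gens_trc by simp
          have sz: "am+bm+x0m+p1+q1m+q2+s2+p3+q3+s3m < a+b+x0+p1+q1+q2+s2+p3+q3+s3" unfolding ea eb ex0 eq1 es3 by simp
          show ?thesis apply (rule bexI[OF _ mem])
            apply (rule exI[of _ "am"])
            apply (rule exI[of _ "bm"])
            apply (rule exI[of _ "x0m"])
            apply (rule exI[of _ "p1"])
            apply (rule exI[of _ "q1m"])
            apply (rule exI[of _ "q2"])
            apply (rule exI[of _ "s2"])
            apply (rule exI[of _ "p3"])
            apply (rule exI[of _ "q3"])
            apply (rule exI[of _ "s3m"])
            using eq cn sz by blast
        next
          case False
          note n3 = False
          show ?thesis
          proof (cases "1 \<le> q1")
            case True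
            have h4: "1 \<le> q1" using True by simp_all
            have zs: "p3 = 0" "s3 = 0" "q2 = 0" "q3 = 0" using  n0 n2 n3 h4 C' by linarith+
            have pos1: "1 \<le> x0" "1 \<le> q1" "1 \<le> s2" using  n0 n2 n3 h4 C' by linarith+
            obtain x0m where ex0: "x0 = x0m + 1" using pos1 by (intro that[of "x0 - 1"]) simp
            obtain q1m where eq1: "q1 = q1m + 1" using pos1 by (intro that[of "q1 - 1"]) simp
            obtain s2m where es2: "s2 = s2m + 1" using pos1 by (intro that[of "s2 - 1"]) simp
            have eq: "trc a b x0 p1 q1 q2 s2 p3 q3 s3 = tadd (trc 0 0 1 0 1 0 1 0 0 0) (trc a b x0m p1 q1m q2 s2m p3 q3 s3)"
              unfolding tadd_trc ex0 eq1 es2 by simp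
            have cn: "Cnd a b x0m p1 q1m q2 s2m p3 q3 s3" using C  zs unfolding ex0 eq1 es2 Cnd_def by simp
            have mem: "trc 0 0 1 0 1 0 1 0 0 0 \<in> set gens" unfolding gens_trc by simp
            have sz: "a+b+x0m+p1+q1m+q2+s2m+p3+q3+s3 < a+b+x0+p1+q1+q2+s2+p3+q3+s3" unfolding ex0 eq1 es2 by simp
            show ?thesis apply (rule bexI[OF _ mem])
              apply (rule exI[of _ "a"])
              apply (rule exI[of _ "b"])
              apply (rule exI[of _ "x0m"])
              apply (rule exI[of _ "p1"])
              apply (rule exI[of _ "q1m"])
              apply (rule exI[of _ "q2"])
              apply (rule exI[of _ "s2m"])
              apply (rule exI[of _ "p3"])
              apply (rule exI[of _ "q3"])
              apply (rule exI[of _ "s3"])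
              using eq cn sz by blast
          next
            case False
            note n4 = False
            show ?thesis
            proof (cases "1 \<le> b")
              case True
              have h5: "1 \<le> b" using True by simp_all
              have zs: "p3 = 0" "s3 = 0" "q1 = 0" "s2 = 0" "q2 = 0" "q3 = 0" using  n0 n2 n3 n4 h5 C' by linarith+
              have pos1: "1 \<le> a" "1 \<le> b" using  n0 n2 n3 n4 h5 C' by linarith+
              obtain am where ea: "a = am + 1" using pos1 by (intro that[of "a - 1"]) simp
              obtain bm where eb: "b = bm + 1" using pos1 by (intro that[of "b - 1"]) simp
              have eq: "trc a b x0 p1 q1 q2 s2 p3 q3 s3 = tadd (trc 1 1 0 0 0 0 0 0 0 0) (trc am bm x0 p1 q1 q2 s2 p3 q3 s3)"
                unfolding tadd_trc ea eb by simp
              have cn: "Cnd am bm x0 p1 q1 q2 s2 p3 q3 s3" using C  zs unfolding ea eb Cnd_def by simp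
              have mem: "trc 1 1 0 0 0 0 0 0 0 0 \<in> set gens" unfolding gens_trc by simp
              have sz: "am+bm+x0+p1+q1+q2+s2+p3+q3+s3 < a+b+x0+p1+q1+q2+s2+p3+q3+s3" unfolding ea eb by simp
              show ?thesis apply (rule bexI[OF _ mem])
                apply (rule exI[of _ "am"])
                apply (rule exI[of _ "bm"])
                apply (rule exI[of _ "x0"])
                apply (rule exI[of _ "p1"])
                apply (rule exI[of _ "q1"])
                apply (rule exI[of _ "q2"])
                apply (rule exI[of _ "s2"])
                apply (rule exI[of _ "p3"])
                apply (rule exI[of _ "q3"])
                apply (rule exI[of _ "s3"])
                using eq cn sz by blast
            next
              case False
              note n5 = False
              show ?thesis
              proof (cases "1 \<le> p1")
                case True
                have h6: "1 \<le> p1" using True by simp_all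
                have zs: "p3 = 0" "s3 = 0" "q1 = 0" "s2 = 0" "q2 = 0" "q3 = 0" "b = 0" "a = p1" using  n0 n2 n3 n4 n5 h6 C' by linarith+
                have pos1: "1 \<le> a" "1 \<le> p1" using  n0 n2 n3 n4 n5 h6 C' by linarith+
                obtain am where ea: "a = am + 1" using pos1 by (intro that[of "a - 1"]) simp
                obtain p1m where ep1: "p1 = p1m + 1" using pos1 by (intro that[of "p1 - 1"]) simp
                have eq: "trc a b x0 p1 q1 q2 s2 p3 q3 s3 = tadd (trc 1 0 0 1 0 0 0 0 0 0) (trc am b x0 p1m q1 q2 s2 p3 q3 s3)"
                  unfolding tadd_trc ea ep1 by simp
                have cn: "Cnd am b x0 p1m q1 q2 s2 p3 q3 s3" using C  zs unfolding ea ep1 Cnd_def by simp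
                have mem: "trc 1 0 0 1 0 0 0 0 0 0 \<in> set gens" unfolding gens_trc by simp
                have sz: "am+b+x0+p1m+q1+q2+s2+p3+q3+s3 < a+b+x0+p1+q1+q2+s2+p3+q3+s3" unfolding ea ep1 by simp
                show ?thesis apply (rule bexI[OF _ mem])
                  apply (rule exI[of _ "am"])
                  apply (rule exI[of _ "b"])
                  apply (rule exI[of _ "x0"])
                  apply (rule exI[of _ "p1m"])
                  apply (rule exI[of _ "q1"])
                  apply (rule exI[of _ "q2"])
                  apply (rule exI[of _ "s2"])
                  apply (rule exI[of _ "p3"])
                  apply (rule exI[of _ "q3"])
                  apply (rule exI[of _ "s3"])
                  using eq cn sz by blast
              next
                case False
                note n6 = False
                have z: "a = 0" "b = 0" "p1 = 0" "q1 = 0" "q2 = 0" "s2 = 0" "p3 = 0" "q3 = 0" "s3 = 0"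
                  using  n0 n2 n3 n4 n5 n6 C' by linarith+
                have pz: "1 \<le> x0" using z pos by simp
                have pos1: "1 \<le> x0" using pz by simp
                obtain x0m where ex0: "x0 = x0m + 1" using pos1 by (intro that[of "x0 - 1"]) simp
                have eq: "trc a b x0 p1 q1 q2 s2 p3 q3 s3 = tadd (trc 0 0 1 0 0 0 0 0 0 0) (trc a b x0m p1 q1 q2 s2 p3 q3 s3)"
                  unfolding tadd_trc ex0 by simp
                have cn: "Cnd a b x0m p1 q1 q2 s2 p3 q3 s3" using C  n0 n2 n3 n4 n5 n6 z pz unfolding ex0 Cnd_def by simp
                have mem: "trc 0 0 1 0 0 0 0 0 0 0 \<in> set gens" unfolding gens_trc by simp
                have sz: "a+b+x0m+p1+q1+q2+s2+p3+q3+s3 < a+b+x0+p1+q1+q2+s2+p3+q3+s3" unfolding ex0 by simp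
                show ?thesis apply (rule bexI[OF _ mem])
                  apply (rule exI[of _ "a"])
                  apply (rule exI[of _ "b"])
                  apply (rule exI[of _ "x0m"])
                  apply (rule exI[of _ "p1"])
                  apply (rule exI[of _ "q1"])
                  apply (rule exI[of _ "q2"])
                  apply (rule exI[of _ "s2"])
                  apply (rule exI[of _ "p3"])
                  apply (rule exI[of _ "q3"])
                  apply (rule exI[of _ "s3"])
                  using eq cn sz by blast
              qed
            qed
          qed
        qed
      qed
    qed
  qed
qed



definition hT :: "nat \<Rightarrow> triple \<Rightarrow> int" where
  "hT i t = (case t of (l, m, n) \<Rightarrow>
     [int (m!0) + int (n!2), int (l!0) + int (n!2), int (n!0) + int (n!3) - int (l!1),
      int (n!0) + int (n!3) - int (m!1), int (n!0) - int (n!1) + int (n!2),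
      int (l!1) + int (n!0) - int (n!3), int (m!1) + int (n!0) - int (n!3),
      int (l!0) + int (m!0) - int (n!1) + int (n!2) - int (n!3)] ! i)"

lemma less8: "i < (8::nat) \<longleftrightarrow> i = 0 \<or> i = 1 \<or> i = 2 \<or> i = 3 \<or> i = 4 \<or> i = 5 \<or> i = 6 \<or> i = 7"
  by arith

lemma hT_gens: "i < 8 \<Longrightarrow> j < 8 \<Longrightarrow> (hT i (gens ! j) = 0 \<longleftrightarrow> i = j) \<and> hT i (gens ! j) \<ge> 0"
  unfolding less8 by (elim disjE; simp add: hT_def gens_def)

lemma hT_nonneg:
  assumes C: "Cnd a b x0 p1 q1 q2 s2 p3 q3 s3" and i: "i < 8"
  shows "hT i (trc a b x0 p1 q1 q2 s2 p3 q3 s3) \<ge> 0"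
proof -
  have C': "q1 + q2 + q3 = s2 + s3" "b \<le> a" "b + p1 + q1 \<le> a + x0"
     "q2 + s2 \<le> p1 + q1" "p3 + q3 + s3 \<le> b + q2 + s2" "q1 \<le> x0" "s2 \<le> q1" "q1 + q2 \<le> x0 + p1"
     "s2 + s3 \<le> q1 + q2" "q1 + q2 + q3 \<le> x0 + p1" "p1 + b \<le> a" "q2 \<le> p1" "p3 + q3 \<le> b"
     "p3 + q3 + s3 \<le> b + q2" using C unfolding Cnd_def by simp_all
  from i show ?thesis unfolding less8
    by (elim disjE; simp add: hT_def trc_def; use C' in linarith)
qed

lemma hT_add: "i < 8 \<Longrightarrow> hT i (tadd (trc a b x0 p1 q1 q2 s2 p3 q3 s3) (trc a' b' x0' p1' q1' q2' s2' p3' q3' s3')) =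
   hT i (trc a b x0 p1 q1 q2 s2 p3 q3 s3) + hT i (trc a' b' x0' p1' q1' q2' s2' p3' q3' s3')"
  unfolding tadd_trc less8 by (elim disjE; simp add: hT_def trc_def)


lemma tzero_trc: "tzero = trc 0 0 0 0 0 0 0 0 0 0"
  by (simp add: tzero_def trc_def)

lemma trc_zero_iff: "trc a b x0 p1 q1 q2 s2 p3 q3 s3 = tzero \<longleftrightarrow> a+b+x0+p1+q1+q2+s2+p3+q3+s3 = 0"
  by (auto simp: tzero_def trc_def)

lemma length_gens: "length gens = 8" by (simp add: gens_def)

lemma gens_ex: "i < 8 \<Longrightarrow> \<exists>a b x0 p1 q1 q2 s2 p3 q3 s3. gens ! i = trc a b x0 p1 q1 q2 s2 p3 q3 s3 \<and>
    Cnd a b x0 p1 q1 q2 s2 p3 q3 s3 \<and> 0 < a+b+x0+p1+q1+q2+s2+p3+q3+s3"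
  unfolding less8 gens_trc using gens_Cnd by (elim disjE) (simp, blast)+

lemma gens_S: "g \<in> set gens \<Longrightarrow> g \<in> S_set"
proof -
  assume "g \<in> set gens"
  then obtain i where i: "i < 8" "g = gens ! i" by (auto simp: in_set_conv_nth length_gens)
  then show ?thesis using gens_ex[OF i(1)] S_char by blast
qed

lemma gens_nz: "g \<in> set gens \<Longrightarrow> g \<noteq> tzero"
  unfolding gens_def tzero_def by auto

lemma in_S_trc: "t \<in> S_set \<Longrightarrow> (\<And>a b x0 p1 q1 q2 s2 p3 q3 s3. Cnd a b x0 p1 q1 q2 s2 p3 q3 s3 \<Longrightarrow>
   t = trc a b x0 p1 q1 q2 s2 p3 q3 s3 \<Longrightarrow> P) \<Longrightarrow> P"
  by (auto simp: S_char)

lemma peel: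
  assumes C: "Cnd a b x0 p1 q1 q2 s2 p3 q3 s3" and nz: "trc a b x0 p1 q1 q2 s2 p3 q3 s3 \<noteq> tzero"
    and i: "i < 8" and h0: "hT i (trc a b x0 p1 q1 q2 s2 p3 q3 s3) = 0"
  shows "\<exists>a' b' x0' p1' q1' q2' s2' p3' q3' s3'. Cnd a' b' x0' p1' q1' q2' s2' p3' q3' s3' \<and>
     trc a b x0 p1 q1 q2 s2 p3 q3 s3 = tadd (gens ! i) (trc a' b' x0' p1' q1' q2' s2' p3' q3' s3')"
proof -
  have pos: "a+b+x0+p1+q1+q2+s2+p3+q3+s3 > 0" using nz trc_zero_iff by auto
  from decomp[OF C pos] obtain g a' b' x0' p1' q1' q2' s2' p3' q3' s3' where
    g: "g \<in> set gens" and C2: "Cnd a' b' x0' p1' q1' q2' s2' p3' q3' s3'"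
    and e: "trc a b x0 p1 q1 q2 s2 p3 q3 s3 = tadd g (trc a' b' x0' p1' q1' q2' s2' p3' q3' s3')" by blast
  from g obtain j where j: "j < 8" "g = gens ! j" by (auto simp: in_set_conv_nth length_gens)
  from gens_ex[OF j(1)] obtain ga gb gx0 gp1 gq1 gq2 gs2 gp3 gq3 gs3 where
    gj: "gens ! j = trc ga gb gx0 gp1 gq1 gq2 gs2 gp3 gq3 gs3" by blast
  have "hT i (trc a b x0 p1 q1 q2 s2 p3 q3 s3) = hT i (gens ! j) + hT i (trc a' b' x0' p1' q1' q2' s2' p3' q3' s3')"
    unfolding e j(2) gj by (rule hT_add[OF i])
  moreover have "hT i (gens ! j) \<ge> 0" using hT_gens[OF i j(1)] by simp
  moreover have "hT i (trc a' b' x0' p1' q1' q2' s2' p3' q3' s3') \<ge> 0" by (rule hT_nonneg[OF C2 i])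
  ultimately have "hT i (gens ! j) = 0" using h0 by linarith
  then have "j = i" using hT_gens[OF i j(1)] by simp
  then show ?thesis using C2 e j(2) by blast
qed

lemma hilbert: "hilbert_basis S_set = set gens"
proof
  show "hilbert_basis S_set \<subseteq> set gens"
  proof
    fix s assume s: "s \<in> hilbert_basis S_set"
    then have sS: "s \<in> S_set" and snz: "s \<noteq> tzero"
      and irr: "\<not> (\<exists>a\<in>S_set. \<exists>b\<in>S_set. a \<noteq> tzero \<and> b \<noteq> tzero \<and> s = tadd a b)"
      unfolding hilbert_basis_def by auto
    from sS obtain a b x0 p1 q1 q2 s2 p3 q3 s3 where C: "Cnd a b x0 p1 q1 q2 s2 p3 q3 s3"
      and st: "s = trc a b x0 p1 q1 q2 s2 p3 q3 s3" by (rule in_S_trc)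
    have pos: "a+b+x0+p1+q1+q2+s2+p3+q3+s3 > 0" using snz st trc_zero_iff by auto
    from decomp[OF C pos] obtain g a' b' x0' p1' q1' q2' s2' p3' q3' s3' where
      g: "g \<in> set gens" and C2: "Cnd a' b' x0' p1' q1' q2' s2' p3' q3' s3'"
      and e: "s = tadd g (trc a' b' x0' p1' q1' q2' s2' p3' q3' s3')" using st by blast
    show "s \<in> set gens"
    proof (cases "trc a' b' x0' p1' q1' q2' s2' p3' q3' s3' = tzero")
      case True
      from g obtain j where j: "j < 8" "g = gens ! j" by (auto simp: in_set_conv_nth length_gens)
      from gens_ex[OF j(1)] obtain ga gb gx0 gp1 gq1 gq2 gs2 gp3 gq3 gs3 where
        gj: "gens ! j = trc ga gb gx0 gp1 gq1 gq2 gs2 gp3 gq3 gs3" by blast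
      have "s = g" unfolding e True tzero_trc j(2) gj tadd_trc by simp
      then show ?thesis using g by simp
    next
      case False
      have "trc a' b' x0' p1' q1' q2' s2' p3' q3' s3' \<in> S_set" using C2 S_char by blast
      then show ?thesis using irr gens_S[OF g] gens_nz[OF g] False e by blast
    qed
  qed
next
  show "set gens \<subseteq> hilbert_basis S_set"
  proof
    fix g assume g: "g \<in> set gens"
    from g obtain i where i: "i < 8" "g = gens ! i" by (auto simp: in_set_conv_nth length_gens)
    from gens_ex[OF i(1)] obtain ga gb gx0 gp1 gq1 gq2 gs2 gp3 gq3 gs3 where
      gi: "gens ! i = trc ga gb gx0 gp1 gq1 gq2 gs2 gp3 gq3 gs3" by blast
    have "\<not> (\<exists>A\<in>S_set. \<exists>B\<in>S_set. A \<noteq> tzero \<and> B \<noteq> tzero \<and> g = tadd A B)"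
    proof
      assume "\<exists>A\<in>S_set. \<exists>B\<in>S_set. A \<noteq> tzero \<and> B \<noteq> tzero \<and> g = tadd A B"
      then obtain A B where A: "A \<in> S_set" and B: "B \<in> S_set" and nz: "A \<noteq> tzero" "B \<noteq> tzero"
        and gAB: "g = tadd A B" by blast
      from A obtain a b x0 p1 q1 q2 s2 p3 q3 s3 where CA: "Cnd a b x0 p1 q1 q2 s2 p3 q3 s3"
        and At: "A = trc a b x0 p1 q1 q2 s2 p3 q3 s3" by (rule in_S_trc)
      from B obtain a2 b2 x02 p12 q12 q22 s22 p32 q32 s32 where CB: "Cnd a2 b2 x02 p12 q12 q22 s22 p32 q32 s32"
        and Bt: "B = trc a2 b2 x02 p12 q12 q22 s22 p32 q32 s32" by (rule in_S_trc)
      have hsum: "hT i g = hT i A + hT i B" unfolding gAB At Bt by (rule hT_add[OF i(1)])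
      have hg: "hT i g = 0" using hT_gens[OF i(1) i(1)] i(2) by simp
      have hA: "hT i A \<ge> 0" "hT i B \<ge> 0" unfolding At Bt by (rule hT_nonneg[OF CA i(1)], rule hT_nonneg[OF CB i(1)])
      have hA0: "hT i A = 0" "hT i B = 0" using hsum hg hA by linarith+
      from peel[OF CA nz(1)[unfolded At] i(1) hA0(1)[unfolded At]] obtain a' b' x0' p1' q1' q2' s2' p3' q3' s3' where
        CA': "Cnd a' b' x0' p1' q1' q2' s2' p3' q3' s3'" and eA: "A = tadd (gens ! i) (trc a' b' x0' p1' q1' q2' s2' p3' q3' s3')"
        using At by blast
      from peel[OF CB nz(2)[unfolded Bt] i(1) hA0(2)[unfolded Bt]] obtain a'' b'' x0'' p1'' q1'' q2'' s2'' p3'' q3'' s3'' where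
        CB': "Cnd a'' b'' x0'' p1'' q1'' q2'' s2'' p3'' q3'' s3''" and eB: "B = tadd (gens ! i) (trc a'' b'' x0'' p1'' q1'' q2'' s2'' p3'' q3'' s3'')"
        using Bt by blast
      define k where "k = (if i = 0 then 1 else (0::nat))"
      have k: "k < 8" "k \<noteq> i" unfolding k_def by auto
      have hk: "hT k (gens ! i) \<ge> 1" using hT_gens[OF k(1) i(1)] k(2) by simp
      have n1: "hT k (trc a' b' x0' p1' q1' q2' s2' p3' q3' s3') \<ge> 0" by (rule hT_nonneg[OF CA' k(1)])
      have n2: "hT k (trc a'' b'' x0'' p1'' q1'' q2'' s2'' p3'' q3'' s3'') \<ge> 0" by (rule hT_nonneg[OF CB' k(1)])
      have "hT k g = hT k A + hT k B" unfolding gAB At Bt by (rule hT_add[OF k(1)])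
      also have "hT k A = hT k (gens ! i) + hT k (trc a' b' x0' p1' q1' q2' s2' p3' q3' s3')"
        unfolding eA gi by (rule hT_add[OF k(1)])
      also have "hT k B = hT k (gens ! i) + hT k (trc a'' b'' x0'' p1'' q1'' q2'' s2'' p3'' q3'' s3'')"
        unfolding eB gi by (rule hT_add[OF k(1)])
      finally have X: "hT k g = hT k (gens ! i) + hT k (trc a' b' x0' p1' q1' q2' s2' p3' q3' s3') +
        (hT k (gens ! i) + hT k (trc a'' b'' x0'' p1'' q1'' q2'' s2'' p3'' q3'' s3''))" .
      from X[unfolded i(2)] hk n1 n2 show False by linarith
    qed
    then show "g \<in> hilbert_basis S_set"
      unfolding hilbert_basis_def using gens_S[OF g] gens_nz[OF g] by blast
  qed
qed



type_synonym vt = "(real \<times> real \<times> real \<times> real) \<times> (real \<times> real \<times> real \<times> real) \<times> (real \<times> real \<times> real \<times> real)"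

definition hvec :: "nat \<Rightarrow> vt" where
  "hvec i = [((0,0,0,0),(1,0,0,0),(0,0,1,0)), ((1,0,0,0),(0,0,0,0),(0,0,1,0)),
     ((0,-1,0,0),(0,0,0,0),(1,0,0,1)), ((0,0,0,0),(0,-1,0,0),(1,0,0,1)),
     ((0,0,0,0),(0,0,0,0),(1,-1,1,0)), ((0,1,0,0),(0,0,0,0),(1,0,0,-1)),
     ((0,0,0,0),(0,1,0,0),(1,0,0,-1)), ((1,0,0,0),(1,0,0,0),(0,-1,1,-1))] ! i"

definition V :: "nat \<Rightarrow> vt" where "V j = emb (gens ! j)"

lemma hvec_emb: "i < 8 \<Longrightarrow> hvec i \<bullet> emb t = real_of_int (hT i t)"
  by (cases t) (unfold less8; elim disjE; simp add: hvec_def emb_def vec4_def hT_def algebra_simps)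

lemma hV: "i < 8 \<Longrightarrow> j < 8 \<Longrightarrow> (hvec i \<bullet> V j = 0 \<longleftrightarrow> i = j) \<and> (i \<noteq> j \<longrightarrow> hvec i \<bullet> V j \<ge> 1)"
proof -
  assume i: "i < 8" and j: "j < 8"
  have e: "hvec i \<bullet> V j = real_of_int (hT i (gens ! j))" unfolding V_def by (rule hvec_emb[OF i])
  have "hT i (gens ! j) = 0 \<longleftrightarrow> i = j" "hT i (gens ! j) \<ge> 0" using hT_gens[OF i j] by auto
  then show ?thesis unfolding e by auto
qed

lemma emb_add: "emb (tadd (trc a b x0 p1 q1 q2 s2 p3 q3 s3) (trc a' b' x0' p1' q1' q2' s2' p3' q3' s3')) =
   emb (trc a b x0 p1 q1 q2 s2 p3 q3 s3) + emb (trc a' b' x0' p1' q1' q2' s2' p3' q3' s3')"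
  unfolding tadd_trc by (simp add: emb_def vec4_def trc_def)

lemma emb_tzero: "emb tzero = 0"
  by (simp add: emb_def vec4_def tzero_def zero_prod_def)

abbreviation HG where "HG \<equiv> convex_cone hull (emb ` set gens)"

lemma S_in_HG_aux: "\<forall>a b x0 p1 q1 q2 s2 p3 q3 s3. Cnd a b x0 p1 q1 q2 s2 p3 q3 s3 \<longrightarrow>
    a+b+x0+p1+q1+q2+s2+p3+q3+s3 = N \<longrightarrow> emb (trc a b x0 p1 q1 q2 s2 p3 q3 s3) \<in> HG"
proof (induction N rule: less_induct)
  case (less N)
  show ?case
  proof (intro allI impI)
    fix a b x0 p1 q1 q2 s2 p3 q3 s3
    assume C: "Cnd a b x0 p1 q1 q2 s2 p3 q3 s3" and N: "a+b+x0+p1+q1+q2+s2+p3+q3+s3 = N"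
    show "emb (trc a b x0 p1 q1 q2 s2 p3 q3 s3) \<in> HG"
    proof (cases "N = 0")
      case True
      then have "trc a b x0 p1 q1 q2 s2 p3 q3 s3 = tzero" using N trc_zero_iff by simp
      then show ?thesis using emb_tzero convex_cone_hull_contains_0 by simp
    next
      case False
      then have pos: "a+b+x0+p1+q1+q2+s2+p3+q3+s3 > 0" using N by simp
      from decomp[OF C pos] obtain g a' b' x0' p1' q1' q2' s2' p3' q3' s3' where
        g: "g \<in> set gens" and C2: "Cnd a' b' x0' p1' q1' q2' s2' p3' q3' s3'"
        and e: "trc a b x0 p1 q1 q2 s2 p3 q3 s3 = tadd g (trc a' b' x0' p1' q1' q2' s2' p3' q3' s3')"
        and lt: "a'+b'+x0'+p1'+q1'+q2'+s2'+p3'+q3'+s3' < a+b+x0+p1+q1+q2+s2+p3+q3+s3" by blast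
      from g obtain j where j: "j < 8" "g = gens ! j" by (auto simp: in_set_conv_nth length_gens)
      from gens_ex[OF j(1)] obtain ga gb gx0 gp1 gq1 gq2 gs2 gp3 gq3 gs3 where
        gj: "gens ! j = trc ga gb gx0 gp1 gq1 gq2 gs2 gp3 gq3 gs3" by blast
      have IH: "emb (trc a' b' x0' p1' q1' q2' s2' p3' q3' s3') \<in> HG"
        using less.IH[of "a'+b'+x0'+p1'+q1'+q2'+s2'+p3'+q3'+s3'"] lt N C2 by blast
      have G: "emb g \<in> HG" using g by (intro hull_inc) simp
      have "emb (trc a b x0 p1 q1 q2 s2 p3 q3 s3) = emb g + emb (trc a' b' x0' p1' q1' q2' s2' p3' q3' s3')"
        unfolding e j(2) gj by (rule emb_add)
      then show ?thesis using convex_cone_hull_add[OF G IH] by simp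
    qed
  qed
qed

lemma S_in_HG: "t \<in> S_set \<Longrightarrow> emb t \<in> HG"
  by (erule in_S_trc) (use S_in_HG_aux in blast)

lemma C_eq: "convex_cone hull (emb ` S_set) = HG"
proof
  show "convex_cone hull (emb ` S_set) \<subseteq> HG"
    by (rule hull_minimal) (auto intro: S_in_HG simp: convex_cone_convex_cone_hull)
  show "HG \<subseteq> convex_cone hull (emb ` S_set)"
    by (rule hull_mono) (auto intro: gens_S)
qed

lemma cone_sum:
  assumes "convex_cone S" "finite A" "\<forall>j\<in>A. f j \<in> S" shows "sum f A \<in> S"
  using assms(2,3) by (induction A rule: finite_induct)
    (auto simp: convex_cone_contains_0[OF assms(1)] convex_cone_add[OF assms(1)])

lemma set_gens_V: "emb ` set gens = V ` {..<8}"
proof -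
  have "set gens = (\<lambda>i. gens ! i) ` {..<8}"
    unfolding set_conv_nth length_gens by auto
  then show ?thesis unfolding V_def by auto
qed

lemma HG_expl: "x \<in> HG \<Longrightarrow> \<exists>c. (\<forall>j. 0 \<le> c j) \<and> x = (\<Sum>j<8. c j *\<^sub>R V j)"
proof -
  let ?K = "{y. \<exists>c. (\<forall>j. 0 \<le> c j) \<and> y = (\<Sum>j<8. c j *\<^sub>R V j)}"
  have cc: "convex_cone ?K" unfolding convex_cone_iff
  proof (intro conjI ballI allI impI)
    show "0 \<in> ?K" by (rule CollectI, rule exI[of _ "\<lambda>_. 0"]) simp
  next
    fix x y assume "x \<in> ?K" "y \<in> ?K"
    then obtain c d where "\<forall>j. 0 \<le> c j" "x = (\<Sum>j<8. c j *\<^sub>R V j)" "\<forall>j. 0 \<le> d j" "y = (\<Sum>j<8. d j *\<^sub>R V j)"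
      by blast
    then show "x + y \<in> ?K"
      by (intro CollectI exI[of _ "\<lambda>j. c j + d j"]) (simp add: scaleR_add_left sum.distrib)
  next
    fix x and t :: real assume "x \<in> ?K" "0 \<le> t"
    then obtain c where "\<forall>j. 0 \<le> c j" "x = (\<Sum>j<8. c j *\<^sub>R V j)" by blast
    then show "t *\<^sub>R x \<in> ?K" using \<open>0 \<le> t\<close>
      by (intro CollectI exI[of _ "\<lambda>j. t * c j"]) (simp add: scaleR_sum_right)
  qed
  have sub: "emb ` set gens \<subseteq> ?K"
  proof
    fix y assume "y \<in> emb ` set gens"
    then obtain i where i: "i < 8" "y = V i" unfolding set_gens_V by auto
    have "(\<Sum>j<8. (if j = i then 1 else 0) *\<^sub>R V j) = (\<Sum>j<8. if j = i then V j else 0)"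
      by (rule sum.cong) auto
    also have "\<dots> = V i" using i(1) by (simp add: sum.delta)
    finally have "(\<Sum>j<8. (if j = i then 1 else 0) *\<^sub>R V j) = V i" .
    then show "y \<in> ?K" using i(2)
      by (intro CollectI exI[of _ "\<lambda>j. if j = i then 1 else (0::real)"]) auto
  qed
  assume "x \<in> HG"
  then have "x \<in> ?K" using hull_minimal[OF sub, of convex_cone] cc by blast
  then show ?thesis by blast
qed

lemma HG_in: "(\<forall>j. 0 \<le> c j) \<Longrightarrow> (\<Sum>j<8. c j *\<^sub>R V j) \<in> HG"
proof -
  assume c: "\<forall>j. 0 \<le> c j"
  have "V j \<in> HG" if "j < 8" for j using that unfolding set_gens_V by (intro hull_inc) auto
  then show ?thesis using c
    by (intro cone_sum[OF convex_cone_convex_cone_hull]) (auto intro: convex_cone_hull_mul)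
qed


lemma hvec_nonneg: "i < 8 \<Longrightarrow> x \<in> HG \<Longrightarrow> hvec i \<bullet> x \<ge> 0"
proof -
  assume i: "i < 8" and x: "x \<in> HG"
  have sub: "emb ` set gens \<subseteq> {y. hvec i \<bullet> y \<ge> 0}"
  proof
    fix y assume "y \<in> emb ` set gens"
    then obtain j where j: "j < 8" "y = V j" unfolding set_gens_V by auto
    then show "y \<in> {y. hvec i \<bullet> y \<ge> 0}" using hV[OF i j(1)] by (cases "i = j") auto
  qed
  have "HG \<subseteq> {y. hvec i \<bullet> y \<ge> 0}"
    by (rule hull_minimal[OF sub]) (rule convex_cone_halfspace_ge)
  then show ?thesis using x by blast
qed

lemma V_in: "i < 8 \<Longrightarrow> V i \<in> HG"
  unfolding set_gens_V by (intro hull_inc) auto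

lemma V_nz: "i < 8 \<Longrightarrow> V i \<noteq> 0"
proof
  assume i: "i < 8" and "V i = 0"
  define k where "k = (if i = 0 then 1 else (0::nat))"
  have k: "k < 8" "k \<noteq> i" unfolding k_def by auto
  have "hvec k \<bullet> V i \<ge> 1" using hV[OF k(1) i] k(2) by auto
  then show False using \<open>V i = 0\<close> by simp
qed

lemma expl_sum_zero:
  assumes i: "i < 8" and c: "\<forall>j. 0 \<le> c j" and h: "hvec i \<bullet> (\<Sum>j<8. c j *\<^sub>R V j) = 0"
  shows "(\<Sum>j<8. c j *\<^sub>R V j) = c i *\<^sub>R V i"
proof -
  have e: "hvec i \<bullet> (\<Sum>j<8. c j *\<^sub>R V j) = (\<Sum>j<8. c j * (hvec i \<bullet> V j))"
    by (simp add: inner_sum_right)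
  have nn: "\<forall>j\<in>{..<8}. 0 \<le> c j * (hvec i \<bullet> V j)"
  proof
    fix j assume "j \<in> {..<8::nat}"
    then have j8: "j < 8" by simp
    have "hvec i \<bullet> V j \<ge> 0" using hV[OF i j8] by (cases "i = j") auto
    then show "0 \<le> c j * (hvec i \<bullet> V j)" using c by simp
  qed
  have z: "\<forall>j\<in>{..<8}. c j * (hvec i \<bullet> V j) = 0"
    using sum_nonneg_eq_0_iff[of "{..<8::nat}" "\<lambda>j. c j * (hvec i \<bullet> V j)"] nn h e by simp
  have cz: "c j = 0" if "j < 8" "j \<noteq> i" for j
  proof -
    have "hvec i \<bullet> V j \<ge> 1" using hV[OF i that(1)] that(2) by auto
    then show ?thesis using z that(1) by auto
  qed
  have "(\<Sum>j<8. c j *\<^sub>R V j) = (\<Sum>j<8. if j = i then c i *\<^sub>R V i else 0)"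
    by (rule sum.cong) (auto simp: cz)
  also have "\<dots> = c i *\<^sub>R V i" using i by (simp add: sum.delta)
  finally show ?thesis .
qed

lemma ray_face: "i < 8 \<Longrightarrow> ray (V i) face_of HG"
proof -
  assume i: "i < 8"
  have f: "HG \<inter> {x. (- hvec i) \<bullet> x = 0} face_of HG"
    by (rule face_of_Int_supporting_hyperplane_le)
      (auto simp: convex_convex_cone_hull hvec_nonneg[OF i])
  have "HG \<inter> {x. (- hvec i) \<bullet> x = 0} = ray (V i)"
  proof
    show "HG \<inter> {x. (- hvec i) \<bullet> x = 0} \<subseteq> ray (V i)"
    proof
      fix x assume x: "x \<in> HG \<inter> {x. (- hvec i) \<bullet> x = 0}"
      then obtain c where c: "\<forall>j. 0 \<le> c j" and xe: "x = (\<Sum>j<8. c j *\<^sub>R V j)" using HG_expl by blast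
      have "hvec i \<bullet> (\<Sum>j<8. c j *\<^sub>R V j) = 0" using x xe by simp
      then have "x = c i *\<^sub>R V i" using expl_sum_zero[OF i c] xe by simp
      then show "x \<in> ray (V i)" unfolding ray_def using c by blast
    qed
  next
    show "ray (V i) \<subseteq> HG \<inter> {x. (- hvec i) \<bullet> x = 0}"
    proof
      fix x assume "x \<in> ray (V i)"
      then obtain t where t: "0 \<le> t" "x = t *\<^sub>R V i" unfolding ray_def by blast
      have "x \<in> HG" using t convex_cone_hull_mul[OF V_in[OF i]] by simp
      moreover have "hvec i \<bullet> V i = 0" using hV[OF i i] by simp
      ultimately show "x \<in> HG \<inter> {x. (- hvec i) \<bullet> x = 0}" using t by simp
    qed
  qed
  then show ?thesis using f by simp
qed

lemma ray_eq: "0 < s \<Longrightarrow> v = s *\<^sub>R u \<Longrightarrow> ray v = ray u"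
proof -
  assume s: "0 < s" and v: "v = s *\<^sub>R u"
  show ?thesis unfolding ray_def
  proof (intro set_eqI iffI)
    fix x assume "x \<in> {t *\<^sub>R v |t. 0 \<le> t}"
    then obtain t where "0 \<le> t" "x = t *\<^sub>R v" by blast
    then show "x \<in> {t *\<^sub>R u |t. 0 \<le> t}" using s v by (intro CollectI exI[of _ "t * s"]) simp
  next
    fix x assume "x \<in> {t *\<^sub>R u |t. 0 \<le> t}"
    then obtain t where "0 \<le> t" "x = t *\<^sub>R u" by blast
    then show "x \<in> {t *\<^sub>R v |t. 0 \<le> t}" using s v by (intro CollectI exI[of _ "t / s"]) simp
  qed
qed

lemma ext_ray_is: "extremal_ray HG R \<Longrightarrow> \<exists>i<8. R = ray (V i)"
proof -
  assume "extremal_ray HG R"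
  then obtain v where F: "R face_of HG" and v0: "v \<noteq> 0" and R: "R = {t *\<^sub>R v | t. 0 \<le> t}"
    unfolding extremal_ray_def by blast
  have vR: "v \<in> R" unfolding R by (rule CollectI, rule exI[of _ 1]) simp
  have RC: "R \<subseteq> HG" using F by (rule face_of_imp_subset)
  then obtain c where c: "\<forall>j. 0 \<le> c j" and ve: "v = (\<Sum>j<8. c j *\<^sub>R V j)" using HG_expl vR by blast
  have "\<exists>j<8. c j > 0"
  proof (rule ccontr)
    assume nc: "\<not> (\<exists>j<8. c j > 0)"
    have cz: "c j = 0" if "j < 8" for j
    proof -
      have "\<not> c j > 0" using nc that by blast
      then show ?thesis using c[rule_format, of j] by linarith
    qed
    have "v = 0" unfolding ve using cz by simp
    then show False using v0 by simp
  qed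
  then obtain j where j: "j < 8" "c j > 0" by blast
  define d where "d = c(j := 0)"
  have d: "\<forall>k. 0 \<le> d k" unfolding d_def using c by simp
  let ?w = "\<Sum>k<8. d k *\<^sub>R V k"
  have wC: "?w \<in> HG" by (rule HG_in[OF d])
  have split: "v = c j *\<^sub>R V j + ?w"
  proof -
    have "v = c j *\<^sub>R V j + (\<Sum>k\<in>{..<8} - {j}. c k *\<^sub>R V k)"
      unfolding ve using j(1) by (simp add: sum.remove)
    moreover have "?w = d j *\<^sub>R V j + (\<Sum>k\<in>{..<8} - {j}. d k *\<^sub>R V k)"
      using j(1) by (simp add: sum.remove)
    moreover have "(\<Sum>k\<in>{..<8} - {j}. d k *\<^sub>R V k) = (\<Sum>k\<in>{..<8} - {j}. c k *\<^sub>R V k)"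
      by (rule sum.cong) (auto simp: d_def)
    ultimately show ?thesis by (simp add: d_def)
  qed
  let ?a = "(2 * c j) *\<^sub>R V j" and ?b = "2 *\<^sub>R ?w"
  have aC: "?a \<in> HG" using convex_cone_hull_mul[OF V_in[OF j(1)]] j(2) by simp
  have bC: "?b \<in> HG" using convex_cone_hull_mul[OF wC] by simp
  have mid: "midpoint ?a ?b = v" unfolding split midpoint_def by (simp add: scaleR_add_right)
  have aR: "?a \<in> R"
  proof (cases "?a = ?b")
    case True
    have "?a = v" using mid[unfolded True[symmetric] midpoint_idem] .
    then show ?thesis using vR by simp
  next
    case False
    then have "midpoint ?a ?b \<in> open_segment ?a ?b" by simp
    then have "v \<in> open_segment ?a ?b" unfolding mid .
    then show ?thesis using F aC bC vR unfolding face_of_def by blast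
  qed
  then obtain t where t: "0 \<le> t" "?a = t *\<^sub>R v" unfolding R by blast
  have a0: "?a \<noteq> 0" using V_nz[OF j(1)] j(2) by simp
  then have tpos: "t > 0" using t by (cases "t = 0") auto
  have "v = (2 * c j / t) *\<^sub>R V j"
  proof -
    have "v = (1 / t) *\<^sub>R ?a" using t tpos by simp
    then show ?thesis by simp
  qed
  then have "ray v = ray (V j)" by (rule ray_eq[rotated]) (use j(2) tpos in simp)
  moreover have "R = ray v" unfolding R ray_def ..
  ultimately show ?thesis using j(1) by blast
qed

lemma ray_distinct: "i < 8 \<Longrightarrow> j < 8 \<Longrightarrow> i \<noteq> j \<Longrightarrow> ray (V i) \<noteq> ray (V j)"
proof
  assume i: "i < 8" and j: "j < 8" and ij: "i \<noteq> j" and eq: "ray (V i) = ray (V j)"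
  have "V j \<in> ray (V j)" unfolding ray_def by (rule CollectI, rule exI[of _ 1]) simp
  then obtain t where "V j = t *\<^sub>R V i" using eq unfolding ray_def by blast
  then have "hvec i \<bullet> V j = t * (hvec i \<bullet> V i)" by simp
  also have "\<dots> = 0" using hV[OF i i] by simp
  finally show False using hV[OF i j] ij by simp
qed


theorem proposition6p3:
  shows "{R. extremal_ray (convex_cone hull (emb ` S_set)) R} = (\<lambda>t. ray (emb t)) ` set gens
       \<and> card {R. extremal_ray (convex_cone hull (emb ` S_set)) R} = 8
       \<and> (\<forall>t \<in> set gens. case t of (lam, mu, nu) \<Rightarrow> LR_coeff lam mu nu = 1)
       \<and> hilbert_basis S_set = set gens"
proof -
  have sg: "set gens = (\<lambda>i. gens ! i) ` {..<8}"
    unfolding set_conv_nth length_gens by auto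
  have img: "(\<lambda>t. ray (emb t)) ` set gens = (\<lambda>i. ray (V i)) ` {..<8}"
    unfolding sg V_def image_image ..
  have E: "{R. extremal_ray (convex_cone hull (emb ` S_set)) R} = (\<lambda>i. ray (V i)) ` {..<8}"
  proof
    show "{R. extremal_ray (convex_cone hull (emb ` S_set)) R} \<subseteq> (\<lambda>i. ray (V i)) ` {..<8}"
    proof
      fix R assume "R \<in> {R. extremal_ray (convex_cone hull (emb ` S_set)) R}"
      then have "extremal_ray HG R" unfolding C_eq by simp
      then obtain i where "i < 8" "R = ray (V i)" using ext_ray_is by blast
      then show "R \<in> (\<lambda>i. ray (V i)) ` {..<8}" by blast
    qed
  next
    show "(\<lambda>i. ray (V i)) ` {..<8} \<subseteq> {R. extremal_ray (convex_cone hull (emb ` S_set)) R}"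
    proof
      fix R assume "R \<in> (\<lambda>i. ray (V i)) ` {..<8}"
      then obtain i where i: "i < 8" and R: "R = ray (V i)" by blast
      have "extremal_ray HG (ray (V i))"
        unfolding extremal_ray_def using ray_face[OF i] V_nz[OF i] unfolding ray_def by blast
      then show "R \<in> {R. extremal_ray (convex_cone hull (emb ` S_set)) R}" unfolding C_eq R by simp
    qed
  qed
  have inj: "inj_on (\<lambda>i. ray (V i)) {..<8}"
    by (rule inj_onI) (use ray_distinct in blast)
  have card: "card ((\<lambda>i. ray (V i)) ` {..<8}) = 8"
    using card_image[OF inj] by simp
  show ?thesis using E img card gens_LR hilbert by simp
qed

end
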